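(* The Carlitz polynomials $\{G_j\}_{j\ge0}$ form an orthonormal basis of $C(O,K)$ if and only if the digit derivatives $\{D_j\}_{j\ge0}$ form an orthonormal basis of $C(O,K)$.
   Context: Let $q$ be a prime power, $K=\mathbf{F}_q((T))$, $O=\mathbf{F}_q[[T]]$, with absolute value $|x|=q^{-v(x)}$ where $v$ is the $T$-adic valuation. $C(O,K)$ is the $K$-Banach space of continuous functions $O\to K$ with sup-norm $\|f\|=\max_{t\in O}|f(t)|$. A sequence $(f_n)_{n\ge0}$ in $C(O,K)$ is an orthonormal basis if every $f$ can be written uniquely as $f=\sum a_nf_n$ with $a_n\in K$, $a_n\to0$, and then $\|f\|=\max|a_n|$. For $n\ge1$ put $[n]=T^{q^n}-T$, $F_0=1$, $F_n=[n][n-1]^q\cdots[1]^{q^{n-1}}$, $e_n(x)=\prod_{m\in\mathbf{F}_q[T],\deg m<n}(x-m)$ (including $m=0$); $E_0(x)=x$, $E_n(x)=e_n(x)/F_n$ for $n\ge1$. Hasse derivatives: $\mathcal{D}_n(\sum_ia_iT^i)=\sum_i\binom{i}{n}a_iT^{i-n}$ (binomials read in $\mathbf{F}_q$). For $j\ge0$ with base-$q$ expansion $j=\alpha_0+\alpha_1q+\cdots+\alpha_sq^s$ ($0\le\alpha_i<q$), set $G_j(x)=\prod_{n=0}^sE_n(x)^{\alpha_n}$ and $D_j(x)=\prod_{n=0}^s\mathcal{D}_n(x)^{\alpha_n}$, with $G_0=D_0=1$. (The paper also writes $\mathcal{D}_j$ for the digit derivative $D_j$.) *)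

theory Defs
  imports "HOL-Computational_Algebra.Computational_Algebra"
begin

text \<open>Setting: 'a is a finite field with q = (card (UNIV :: 'a set)) elements (so q is a prime power),
  K = 'a fls = F_q((T)), O = F_q[[T]] = elements of K with valuation >= 0 (including 0).\<close>

definition absK :: "'a::{finite,field} fls \<Rightarrow> real" where
  "absK x = (if x = 0 then 0 else real (card (UNIV :: 'a set)) powi (- fls_subdegree x))"

definition OK :: "'a::{finite,field} fls set" where
  "OK = {x. x = 0 \<or> fls_subdegree x \<ge> 0}"

text \<open>C(O,K): functions continuous on O (values outside O are irrelevant)\<close>
definition CK :: "('a::{finite,field} fls \<Rightarrow> 'a fls) set" where
  "CK = {f. \<forall>x\<in>OK. \<forall>e>0. \<exists>d>0. \<forall>y\<in>OK. absK (y - x) < d \<longrightarrow> absK (f y - f x) < e}"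

definition supnorm :: "('a::{finite,field} fls \<Rightarrow> 'a fls) \<Rightarrow> real" where
  "supnorm f = (SUP t\<in>OK. absK (f t))"

definition series_rep :: "(nat \<Rightarrow> 'a::{finite,field} fls) \<Rightarrow> (nat \<Rightarrow> 'a fls \<Rightarrow> 'a fls)
    \<Rightarrow> ('a fls \<Rightarrow> 'a fls) \<Rightarrow> bool" where
  "series_rep a b f \<longleftrightarrow>
     (\<lambda>N. supnorm (\<lambda>t. f t - (\<Sum>n<N. a n * b n t))) \<longlonglongrightarrow> 0"

definition is_ONB :: "(nat \<Rightarrow> 'a::{finite,field} fls \<Rightarrow> 'a fls) \<Rightarrow> bool" where
  "is_ONB b \<longleftrightarrow>
     (\<forall>n. b n \<in> CK) \<and>
     (\<forall>f\<in>CK. \<exists>!a. (\<lambda>n. absK (a n)) \<longlonglongrightarrow> 0 \<and> series_rep a b f) \<and>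
     (\<forall>f\<in>CK. \<forall>a. (\<lambda>n. absK (a n)) \<longlonglongrightarrow> 0 \<and> series_rep a b f
                   \<longrightarrow> supnorm f = (SUP n. absK (a n)))"

definition bracketK :: "nat \<Rightarrow> 'a::{finite,field} fls" where
  "bracketK n = fls_X ^ ((card (UNIV :: 'a set)) ^ n) - fls_X"

definition carlitzF :: "nat \<Rightarrow> 'a::{finite,field} fls" where
  "carlitzF n = (\<Prod>i\<in>{1..n}. bracketK i ^ ((card (UNIV :: 'a set)) ^ (n - i)))"

definition carlitz_e :: "nat \<Rightarrow> 'a::{finite,field} fls \<Rightarrow> 'a fls" where
  "carlitz_e n x = (\<Prod>m\<in>{m::'a poly. degree m < n}. x - fps_to_fls (fps_of_poly m))"

definition carlitzE :: "nat \<Rightarrow> 'a::{finite,field} fls \<Rightarrow> 'a fls" where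
  "carlitzE n x = (if n = 0 then x else carlitz_e n x / carlitzF n)"

definition hasseD :: "nat \<Rightarrow> 'a::{finite,field} fls \<Rightarrow> 'a fls" where
  "hasseD n x = fps_to_fls (Abs_fps (\<lambda>k. of_nat ((k + n) choose n) * fls_nth x (int (k + n))))"

definition qdigit :: "'a::{finite,field} itself \<Rightarrow> nat \<Rightarrow> nat \<Rightarrow> nat" where
  "qdigit _ j i = (j div (card (UNIV :: 'a set)) ^ i) mod (card (UNIV :: 'a set))"

text \<open>G_j = prod_n E_n^{alpha_n}; digits with index > j vanish, so the product over
  n <= j is the product over the base-q expansion (and is 1 for j = 0).\<close>
definition carlitzG :: "nat \<Rightarrow> 'a::{finite,field} fls \<Rightarrow> 'a fls" where
  "carlitzG j x = (\<Prod>n\<in>{..j}. carlitzE n x ^ qdigit TYPE('a) j n)"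

definition digitD :: "nat \<Rightarrow> 'a::{finite,field} fls \<Rightarrow> 'a fls" where
  "digitD j x = (\<Prod>n\<in>{..j}. hasseD n x ^ qdigit TYPE('a) j n)"

end

theory Submission
  imports Defs
begin

definition vge :: "'a::zero fls \<Rightarrow> int \<Rightarrow> bool" where
  "vge x k \<longleftrightarrow> (\<forall>i<k. fls_nth x i = 0)"

lemma card_gt1: "1 < card (UNIV :: 'a::{finite,field} set)"
proof -
  have "{0::'a, 1} \<subseteq> UNIV" by simp
  hence "card {0::'a,1} \<le> card (UNIV :: 'a set)" by (rule card_mono[OF finite_UNIV])
  thus ?thesis by simp
qed

lemma powi_le_iff: "1 < (a::real) \<Longrightarrow> a powi m \<le> a powi n \<longleftrightarrow> m \<le> n"
  by (meson linorder_not_le power_int_increasing power_int_strict_increasing less_imp_le)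
lemma powi_less_iff: "1 < (a::real) \<Longrightarrow> a powi m < a powi n \<longleftrightarrow> m < n"
  by (meson linorder_not_le power_int_increasing power_int_strict_increasing less_imp_le)

lemma vge_0 [simp]: "vge 0 k" by (simp add: vge_def)
lemma vge_mono: "vge x k \<Longrightarrow> j \<le> k \<Longrightarrow> vge x j" by (auto simp: vge_def)
lemma vge_add: "vge x k \<Longrightarrow> vge y k \<Longrightarrow> vge (x + y) (k::int)" by (auto simp: vge_def)
lemma vge_diff: "vge x k \<Longrightarrow> vge y k \<Longrightarrow> vge (x - y :: 'a::ab_group_add fls) (k::int)" by (auto simp: vge_def)
lemma vge_uminus [simp]: "vge (- x :: 'a::ab_group_add fls) k = vge x k" by (auto simp: vge_def)
lemma vge_diff_sym: "vge (x - y :: 'a::ab_group_add fls) k = vge (y - x) k"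
  by (metis minus_diff_eq vge_uminus)
lemma vge_sum: "(\<And>i. i \<in> A \<Longrightarrow> vge (f i) k) \<Longrightarrow> vge (\<Sum>i\<in>A. f i :: 'a::comm_monoid_add fls) k"
  by (induction A rule: infinite_finite_induct) (auto intro: vge_add)

lemma vge_iff_subdeg: "vge x k \<longleftrightarrow> x = 0 \<or> k \<le> fls_subdegree x"
proof
  assume "vge x k"
  show "x = 0 \<or> k \<le> fls_subdegree x"
  proof (cases "x = 0")
    case False
    then show ?thesis using \<open>vge x k\<close> by (auto simp: vge_def intro: fls_subdegree_geI)
  qed simp
next
  assume "x = 0 \<or> k \<le> fls_subdegree x"
  thus "vge x k" by (auto simp: vge_def)
qed

lemma vge_mult: "vge x a \<Longrightarrow> vge y b \<Longrightarrow> vge (x * y :: 'a::idom fls) (a + b)"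
  by (cases "x = 0"; cases "y = 0") (auto simp: vge_iff_subdeg)

lemma vge_all_zero: "(\<And>k. vge x k) \<Longrightarrow> x = 0"
proof (rule ccontr)
  assume "\<And>k. vge x k" "x \<noteq> 0"
  hence "fls_subdegree x + 1 \<le> fls_subdegree x" using vge_iff_subdeg by blast
  thus False by simp
qed

lemma vge_const [simp]: "vge (fls_const c) 0" by (simp add: vge_def)

lemma vge_X_power: "vge (fls_X ^ n * x :: 'a::idom fls) k \<longleftrightarrow> vge x (k - int n)"
  by (cases "x = 0") (auto simp: vge_iff_subdeg)

lemma OK_iff: "x \<in> OK \<longleftrightarrow> vge x 0"
  by (auto simp: OK_def vge_iff_subdeg)

lemma absK_nonneg: "absK x \<ge> 0"
  by (simp add: absK_def)

lemma absK_0 [simp]: "absK 0 = 0" by (simp add: absK_def)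

lemma absK_eq0 [simp]: "absK (x::'a::{finite,field} fls) = 0 \<longleftrightarrow> x = 0"
  using card_gt1[where 'a='a] by (simp add: absK_def)

lemma absK_mult: "absK (x * y :: 'a::{finite,field} fls) = absK x * absK y"
  by (cases "x = 0"; cases "y = 0") (auto simp: absK_def power_int_add[symmetric] algebra_simps)

lemma absK_minus: "absK (- x :: 'a::{finite,field} fls) = absK x"
  by (simp add: absK_def)

lemma absK_diff_sym: "absK (x - y :: 'a::{finite,field} fls) = absK (y - x)"
  by (metis absK_minus minus_diff_eq)

lemma absK_ultra: "absK (x + y :: 'a::{finite,field} fls) \<le> max (absK x) (absK y)"
proof (cases "x = 0 \<or> y = 0 \<or> x + y = 0")
  case True
  then show ?thesis by (auto simp: absK_nonneg le_max_iff_disj)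
next
  case False
  have q: "1 < real (card (UNIV :: 'a set))" using card_gt1[where 'a='a] by simp
  have "fls_subdegree (x + y) \<ge> min (fls_subdegree x) (fls_subdegree y)"
    using False fls_plus_subdegree by blast
  then show ?thesis using False q
    by (auto simp: absK_def powi_le_iff le_max_iff_disj min_def split: if_splits)
qed

lemma absK_ultra_diff: "absK (x - y :: 'a::{finite,field} fls) \<le> max (absK x) (absK y)"
  using absK_ultra[of x "-y"] by (simp add: absK_minus)

lemma absK_le_iff: "absK (x::'a::{finite,field} fls) \<le> real (card (UNIV :: 'a set)) powi (-k) \<longleftrightarrow> vge x k"
proof (cases "x = 0")
  case False
  have q: "1 < real (card (UNIV :: 'a set))" using card_gt1[where 'a='a] by simp
  have "absK x \<le> real (card (UNIV :: 'a set)) powi (-k) \<longleftrightarrow> - fls_subdegree x \<le> -k"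
    using False q by (simp add: absK_def powi_le_iff)
  also have "\<dots> \<longleftrightarrow> vge x k" using False by (auto simp: vge_iff_subdeg)
  finally show ?thesis .
qed (simp add: absK_def)

lemma absK_lt_iff: "absK (x::'a::{finite,field} fls) < real (card (UNIV :: 'a set)) powi (-k) \<longleftrightarrow> vge x (k+1)"
proof (cases "x = 0")
  case False
  have q: "1 < real (card (UNIV :: 'a set))" using card_gt1[where 'a='a] by simp
  have "absK x < real (card (UNIV :: 'a set)) powi (-k) \<longleftrightarrow> - fls_subdegree x < -k"
    using False q by (simp add: absK_def powi_less_iff)
  also have "\<dots> \<longleftrightarrow> vge x (k+1)" using False by (auto simp: vge_iff_subdeg)
  finally show ?thesis .
next
  case True
  have q: "1 < real (card (UNIV :: 'a set))" using card_gt1[where 'a='a] by simp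
  then show ?thesis using True by (simp add: absK_def)
qed

lemma small_power: "e > 0 \<Longrightarrow> \<exists>k::int. real (card (UNIV :: 'a::{finite,field} set)) powi (-k) < e"
proof -
  assume e: "e > 0"
  have q: "1 < real (card (UNIV :: 'a set))" using card_gt1[where 'a='a] by simp
  obtain n :: nat where "(1 / real (card (UNIV :: 'a set))) ^ n < e"
    using real_arch_pow_inv[OF e, of "1/real (card (UNIV :: 'a set))"] q by auto
  hence "real (card (UNIV :: 'a set)) powi (- int n) < e"
    by (simp add: power_int_minus power_one_over inverse_eq_divide)
  thus ?thesis by blast
qed

lemma big_power: "\<exists>k::int. B \<le> real (card (UNIV :: 'a::{finite,field} set)) powi k"
proof -
  have q: "1 < real (card (UNIV :: 'a set))" using card_gt1[where 'a='a] by simp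
  obtain n :: nat where "B < real (card (UNIV :: 'a set)) ^ n"
    using real_arch_pow[OF q] by blast
  thus ?thesis by (metis less_imp_le power_int_of_nat)
qed

lemma absK_tendsto_iff:
  "(\<lambda>n. absK (a n :: 'a::{finite,field} fls)) \<longlonglongrightarrow> 0 \<longleftrightarrow> (\<forall>k. \<exists>N. \<forall>n\<ge>N. vge (a n) k)"
proof
  assume h: "(\<lambda>n. absK (a n)) \<longlonglongrightarrow> 0"
  show "\<forall>k. \<exists>N. \<forall>n\<ge>N. vge (a n) k"
  proof
    fix k :: int
    have q: "1 < real (card (UNIV :: 'a set))" using card_gt1[where 'a='a] by simp
    have "real (card (UNIV :: 'a set)) powi (-k) > 0" using q by simp
    then obtain N where "\<forall>n\<ge>N. norm (absK (a n) - 0) < real (card (UNIV :: 'a set)) powi (-k)"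
      using h LIMSEQ_D by blast
    thus "\<exists>N. \<forall>n\<ge>N. vge (a n) k"
      using absK_nonneg absK_le_iff by (metis abs_of_nonneg diff_zero less_imp_le real_norm_def)
  qed
next
  assume h: "\<forall>k. \<exists>N. \<forall>n\<ge>N. vge (a n) k"
  show "(\<lambda>n. absK (a n)) \<longlonglongrightarrow> 0"
  proof (rule LIMSEQ_I)
    fix r :: real assume "r > 0"
    then obtain k where k: "real (card (UNIV :: 'a set)) powi (-k) < r" using small_power by blast
    obtain N where "\<forall>n\<ge>N. vge (a n) k" using h by blast
    have "\<forall>n\<ge>N. norm (absK (a n) - 0) < r"
    proof safe
      fix n assume "n \<ge> N"
      hence "absK (a n) \<le> real (card (UNIV :: 'a set)) powi (-k)"
        using absK_le_iff \<open>\<forall>n\<ge>N. vge (a n) k\<close> by blast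
      thus "norm (absK (a n) - 0) < r" using k absK_nonneg[of "a n"] by simp
    qed
    thus "\<exists>N. \<forall>n\<ge>N. norm (absK (a n) - 0) < r" by blast
  qed
qed

lemma psum_nth_stable:
  fixes x :: "nat \<Rightarrow> 'a::comm_monoid_add fls"
  assumes "\<forall>n\<ge>A. vge (x n) j" "A \<le> B" "i < j"
  shows "fls_nth (\<Sum>n<B. x n) i = fls_nth (\<Sum>n<A. x n) i"
proof -
  have "(\<Sum>n<B. x n) = (\<Sum>n<A. x n) + (\<Sum>n\<in>{A..<B}. x n)"
    using assms(2) by (simp add: lessThan_atLeast0 sum.atLeastLessThan_concat)
  moreover have "fls_nth (\<Sum>n\<in>{A..<B}. x n) i = 0"
    unfolding fls_nth_sum
  proof (rule sum.neutral, rule ballI)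
    fix n assume "n \<in> {A..<B}"
    hence "vge (x n) j" using assms(1) by auto
    thus "fls_nth (x n) i = 0" using assms(3) unfolding vge_def by blast
  qed
  ultimately show ?thesis by simp
qed

lemma series_lim:
  fixes x :: "nat \<Rightarrow> 'a::ab_group_add fls"
  assumes conv: "\<forall>k. \<exists>N. \<forall>n\<ge>N. vge (x n) k"
  shows "\<exists>s. \<forall>k N. (\<forall>n\<ge>N. vge (x n) k) \<longrightarrow> vge (s - (\<Sum>n<N. x n)) k"
proof -
  define P where "P N = (\<Sum>n<N. x n)" for N
  define M where "M i = (LEAST N. \<forall>n\<ge>N. vge (x n) (i+1))" for i
  have M: "\<forall>n\<ge>M i. vge (x n) (i+1)" for i
    unfolding M_def using conv LeastI_ex[where P="\<lambda>N. \<forall>n\<ge>N. vge (x n) (i+1)"] by blast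
  have Mle: "M i \<le> N" if "\<forall>n\<ge>N. vge (x n) (i+1)" for i N
    unfolding M_def using that by (simp add: Least_le)
  define f where "f i = fls_nth (P (M i)) i" for i
  obtain N0 where N0: "\<forall>n\<ge>N0. vge (x n) 0" using conv by blast
  have fneg: "f i = fls_nth (P N0) i" if "i < 0" for i
  proof -
    have "\<forall>n\<ge>N0. vge (x n) (i+1)" using N0 that by (auto intro: vge_mono)
    hence "M i \<le> N0" by (rule Mle)
    have "fls_nth (P N0) i = fls_nth (P (M i)) i"
      unfolding P_def by (rule psum_nth_stable[OF M \<open>M i \<le> N0\<close>]) simp
    thus ?thesis by (simp add: f_def)
  qed
  have ev: "\<forall>\<^sub>\<infinity> n::nat. f (- int n) = 0"
  proof -
    have 1: "\<forall>\<^sub>\<infinity> n::nat. fls_nth (P N0) (- int n) = 0" by (rule MOST_fls_neg_nth_eq_0)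
    have 2: "\<forall>\<^sub>\<infinity> n::nat. n \<noteq> 0" using MOST_nat[of "\<lambda>n::nat. n \<noteq> 0"] by auto
    have "\<forall>\<^sub>\<infinity> n::nat. fls_nth (P N0) (- int n) = 0 \<and> n \<noteq> 0"
      using eventually_conj[OF 1 2] .
    thus ?thesis
    proof (rule eventually_mono)
      fix n :: nat assume "fls_nth (P N0) (- int n) = 0 \<and> n \<noteq> 0"
      thus "f (- int n) = 0" using fneg[of "- int n"] by simp
    qed
  qed
  define s where "s = Abs_fls f"
  have snth: "fls_nth s i = f i" for i unfolding s_def using ev by simp
  have "vge (s - (\<Sum>n<N. x n)) k" if h: "\<forall>n\<ge>N. vge (x n) k" for k N
    unfolding vge_def
  proof safe
    fix i assume "i < k"
    define L where "L = max (M i) N"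
    have "fls_nth (P L) i = fls_nth (P (M i)) i"
      unfolding P_def L_def by (rule psum_nth_stable[OF M]) auto
    moreover have "fls_nth (P L) i = fls_nth (P N) i"
      unfolding P_def L_def by (rule psum_nth_stable[OF h]) (use \<open>i < k\<close> in auto)
    ultimately show "fls_nth (s - (\<Sum>n<N. x n)) i = 0"
      by (simp add: snth f_def P_def)
  qed
  thus ?thesis by blast
qed

lemma nth_const_X_power: "fls_nth (fls_const a * fls_X ^ k) i = (if i = int k then a else 0)"
  by simp

definition badK :: "('a::{finite,field} fls \<Rightarrow> 'a fls) \<Rightarrow> 'a fls \<Rightarrow> nat \<Rightarrow> bool" where
  "badK f z k \<longleftrightarrow> (\<forall>m::int. \<exists>x\<in>OK. \<exists>y\<in>OK. vge (x - z) (int k) \<and> vge (y - z) (int k)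
      \<and> vge (x - y) m \<and> absK (f x - f y) \<ge> 1)"

lemma badK_child:
  assumes "badK f z k"
  shows "\<exists>a. badK f (z + fls_const a * fls_X ^ k) (Suc k)"
proof (rule ccontr)
  assume "\<not> ?thesis"
  hence "\<forall>a. \<exists>m. \<not> (\<exists>x\<in>OK. \<exists>y\<in>OK. vge (x - (z + fls_const a * fls_X ^ k)) (int (Suc k))
      \<and> vge (y - (z + fls_const a * fls_X ^ k)) (int (Suc k)) \<and> vge (x - y) m \<and> absK (f x - f y) \<ge> 1)"
    unfolding badK_def by blast
  then obtain g where g: "\<And>a. \<not> (\<exists>x\<in>OK. \<exists>y\<in>OK. vge (x - (z + fls_const a * fls_X ^ k)) (int (Suc k))
      \<and> vge (y - (z + fls_const a * fls_X ^ k)) (int (Suc k)) \<and> vge (x - y) (g a) \<and> absK (f x - f y) \<ge> 1)"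
    by metis
  define m where "m = max (int (Suc k)) (Max (range g))"
  have gm: "g a \<le> m" for a unfolding m_def by (simp add: le_max_iff_disj)
  obtain x y where xy: "x \<in> OK" "y \<in> OK" "vge (x - z) (int k)" "vge (y - z) (int k)"
    "vge (x - y) m" "absK (f x - f y) \<ge> 1"
    using assms unfolding badK_def by blast
  define a where "a = fls_nth (x - z) (int k)"
  have 1: "vge (x - (z + fls_const a * fls_X ^ k)) (int (Suc k))"
    using xy(3) unfolding vge_def a_def by (auto simp: less_Suc_eq)
  have "vge (x - y) (int (Suc k))" using xy(5) unfolding m_def by (auto intro: vge_mono)
  hence 2: "vge (y - (z + fls_const a * fls_X ^ k)) (int (Suc k))"
    using vge_add[OF 1, of "y - x"] by (simp add: vge_diff_sym algebra_simps)
  have "vge (x - y) (g a)" using xy(5) gm by (auto intro: vge_mono)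
  thus False using g[of a] xy 1 2 by blast
qed

lemma CK_unif_1:
  assumes f: "f \<in> CK"
  shows "\<exists>k::nat. \<forall>x\<in>OK. \<forall>y\<in>OK. vge (x - y) (int k) \<longrightarrow> absK (f x - f y) < 1"
proof (rule ccontr)
  assume "\<not> ?thesis"
  hence bad0: "badK f 0 0" unfolding badK_def
    by (auto simp: OK_iff not_less) (metis nat_int vge_mono nat_le_iff_add int_nat_eq linorder_le_cases of_nat_0_le_iff)
  define dig where "dig k z = (SOME a. badK f (z + fls_const a * fls_X ^ k) (Suc k))" for k z
  define zz where "zz = rec_nat 0 (\<lambda>k z. z + fls_const (dig k z) * fls_X ^ k)"
  have zz0: "zz 0 = 0" and zzS: "zz (Suc k) = zz k + fls_const (dig k (zz k)) * fls_X ^ k" for k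
    unfolding zz_def by simp_all
  have bad: "badK f (zz k) k" for k
  proof (induction k)
    case 0 then show ?case using bad0 zz0 by simp
  next
    case (Suc k)
    then show ?case unfolding zzS dig_def by (rule someI_ex[OF badK_child])
  qed
  have zz_nth_low: "fls_nth (zz k) i = 0" if "i < 0" for k i
    using that by (induction k) (auto simp: zz0 zzS)
  have zz_stable: "fls_nth (zz m) i = fls_nth (zz (Suc (nat i))) i" if "m \<ge> Suc (nat i)" "i \<ge> 0" for m i
    using that
  proof (induction m)
    case 0 then show ?case by simp
  next
    case (Suc m)
    show ?case
    proof (cases "Suc m = Suc (nat i)")
      case False
      hence "m \<ge> Suc (nat i)" using Suc.prems by simp
      thus ?thesis using Suc.IH Suc.prems by (auto simp: zzS)
    qed simp
  qed
  define z where "z = fps_to_fls (Abs_fps (\<lambda>i. fls_nth (zz (Suc i)) (int i)))"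
  have zOK: "z \<in> OK" unfolding OK_iff vge_def z_def by simp
  have zclose: "vge (z - zz k) (int k)" for k
    unfolding vge_def
  proof safe
    fix i assume "i < int k"
    show "fls_nth (z - zz k) i = 0"
    proof (cases "i < 0")
      case True thus ?thesis by (simp add: z_def zz_nth_low)
    next
      case False
      hence "fls_nth z i = fls_nth (zz (Suc (nat i))) i" by (simp add: z_def)
      also have "\<dots> = fls_nth (zz k) i" using zz_stable[of i k] False \<open>i < int k\<close> by simp
      finally show ?thesis by simp
    qed
  qed
  obtain d where d: "d > 0" "\<forall>y\<in>OK. absK (y - z) < d \<longrightarrow> absK (f y - f z) < 1"
  proof -
    have "\<forall>e>0. \<exists>d>0. \<forall>y\<in>OK. absK (y - z) < d \<longrightarrow> absK (f y - f z) < e"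
      using f zOK unfolding CK_def by blast
    hence "\<exists>d>0. \<forall>y\<in>OK. absK (y - z) < d \<longrightarrow> absK (f y - f z) < 1" by simp
    thus ?thesis using that by blast
  qed
  obtain k0 :: int where k0: "real (card (UNIV :: 'a set)) powi (-k0) < d" using small_power d(1) by blast
  define k where "k = nat k0"
  have q: "1 < real (card (UNIV :: 'a set))" using card_gt1[where 'a='a] by simp
  have "real (card (UNIV :: 'a set)) powi (- int k) \<le> real (card (UNIV :: 'a set)) powi (-k0)"
    using q unfolding k_def by (simp add: powi_le_iff)
  hence kd: "real (card (UNIV :: 'a set)) powi (- int k) < d" using k0 by simp
  obtain x y where xy: "x \<in> OK" "y \<in> OK" "vge (x - zz k) (int k)" "vge (y - zz k) (int k)"
    "absK (f x - f y) \<ge> 1"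
    using bad[of k] unfolding badK_def by blast
  have "vge (x - z) (int k)" using vge_diff[OF xy(3) zclose[of k]] by simp
  hence "absK (x - z) < d" using kd absK_le_iff[of "x - z" "int k"] by simp
  hence 1: "absK (f x - f z) < 1" using d xy by blast
  have "vge (y - z) (int k)" using vge_diff[OF xy(4) zclose[of k]] by simp
  hence "absK (y - z) < d" using kd absK_le_iff[of "y - z" "int k"] by simp
  hence 2: "absK (f y - f z) < 1" using d xy by blast
  have "absK (f x - f y) \<le> max (absK (f x - f z)) (absK (f y - f z))"
    using absK_ultra_diff[of "f x - f z" "f y - f z"] by simp
  thus False using 1 2 xy(5) by simp
qed

definition truncK :: "nat \<Rightarrow> 'a::{finite,field} fls \<Rightarrow> 'a fls" where
  "truncK k x = (\<Sum>i<k. fls_const (fls_nth x (int i)) * fls_X ^ i)"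

lemma truncK_nth: "fls_nth (truncK k x) i = (if 0 \<le> i \<and> i < int k then fls_nth x i else 0)"
proof -
  have "fls_nth (truncK k x) i = (\<Sum>j<k. if i = int j then fls_nth x (int j) else 0)"
    by (auto simp: truncK_def fls_nth_sum intro!: sum.cong)
  also have "\<dots> = (\<Sum>j\<in>{..<k} \<inter> {j. i = int j}. fls_nth x (int j))"
    by (simp add: sum.inter_restrict)
  also have "\<dots> = (if 0 \<le> i \<and> i < int k then fls_nth x i else 0)"
  proof (cases "0 \<le> i \<and> i < int k")
    case True
    hence "{..<k} \<inter> {j. i = int j} = {nat i}" by auto
    thus ?thesis using True by simp
  next
    case False
    hence "{..<k} \<inter> {j. i = int j} = {}" by auto
    thus ?thesis using False by (simp only: sum.empty if_False)
  qed
  finally show ?thesis .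
qed

lemma truncK_OK: "truncK k x \<in> OK"
  by (simp add: OK_iff vge_def truncK_nth)

lemma truncK_close: "x \<in> OK \<Longrightarrow> vge (x - truncK k x) (int k)"
  by (auto simp: OK_iff vge_def truncK_nth)

lemma truncK_range: "truncK k ` (UNIV :: 'a::{finite,field} fls set) \<subseteq>
   (\<lambda>c. \<Sum>i<k. fls_const (c i) * fls_X ^ i) ` (PiE {..<k} (\<lambda>_. UNIV))"
proof
  fix y assume "y \<in> truncK k ` (UNIV :: 'a fls set)"
  then obtain x where x: "y = truncK k x" by blast
  define c where "c = restrict (\<lambda>i. fls_nth x (int i)) {..<k}"
  have "c \<in> PiE {..<k} (\<lambda>_. UNIV)" unfolding c_def by simp
  moreover have "y = (\<Sum>i<k. fls_const (c i) * fls_X ^ i)"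
    unfolding x truncK_def c_def by (intro sum.cong) auto
  ultimately show "y \<in> (\<lambda>c. \<Sum>i<k. fls_const (c i) * fls_X ^ i) ` (PiE {..<k} (\<lambda>_. UNIV))" by blast
qed

lemma finite_truncK_range: "finite (truncK k ` (UNIV :: 'a::{finite,field} fls set))"
  by (rule finite_subset[OF truncK_range]) (intro finite_imageI finite_PiE; simp)

lemma CK_bounded:
  assumes "f \<in> CK"
  shows "\<exists>B. \<forall>x\<in>OK. absK (f x) \<le> B"
proof -
  obtain k where k: "\<forall>x\<in>OK. \<forall>y\<in>OK. vge (x - y) (int k) \<longrightarrow> absK (f x - f y) < 1"
    using CK_unif_1[OF assms] by blast
  define S where "S = truncK k ` (UNIV :: 'a fls set)"
  have fin: "finite ((\<lambda>x. absK (f x)) ` S)" unfolding S_def using finite_truncK_range by blast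
  define B where "B = max 1 (Max ((\<lambda>x. absK (f x)) ` S))"
  have "absK (f x) \<le> B" if x: "x \<in> OK" for x
  proof -
    have t: "truncK k x \<in> S" unfolding S_def by blast
    have "absK (f x - f (truncK k x)) < 1" using k x truncK_OK truncK_close by blast
    moreover have "absK (f (truncK k x)) \<le> Max ((\<lambda>x. absK (f x)) ` S)" using fin t by simp
    moreover have "absK (f x) \<le> max (absK (f x - f (truncK k x))) (absK (f (truncK k x)))"
      using absK_ultra[of "f x - f (truncK k x)" "f (truncK k x)"] by simp
    ultimately show ?thesis unfolding B_def by linarith
  qed
  thus ?thesis by blast
qed

abbreviation qR :: "'a::{finite,field} itself \<Rightarrow> real" where
  "qR _ \<equiv> real (card (UNIV :: 'a set))"

lemma absK_le1_iff: "absK (x::'a::{finite,field} fls) \<le> 1 \<longleftrightarrow> vge x 0"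
  using absK_le_iff[of x 0] by simp

lemma zero_OK: "0 \<in> OK" by (simp add: OK_def)

lemma CK_I_mod:
  fixes f :: "'a::{finite,field} fls \<Rightarrow> 'a fls"
  assumes "\<And>k. \<exists>k'. \<forall>x\<in>OK. \<forall>y\<in>OK. vge (x - y) k' \<longrightarrow> vge (f x - f y) k"
  shows "f \<in> CK"
  unfolding CK_def
proof (safe)
  fix x :: "'a fls"
  fix e :: real assume x: "x \<in> OK" and e: "0 < e"
  obtain k where k: "qR TYPE('a) powi (-k) < e" using small_power e by blast
  obtain k' where k': "\<forall>x\<in>OK. \<forall>y\<in>OK. vge (x - y) k' \<longrightarrow> vge (f x - f y) k" using assms by blast
  have q: "1 < qR TYPE('a)" using card_gt1[where 'a='a] by simp
  show "\<exists>d>0. \<forall>y\<in>OK. absK (y - x) < d \<longrightarrow> absK (f y - f x) < e"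
  proof (intro exI conjI ballI impI)
    show "qR TYPE('a) powi (-(k' - 1)) > 0" using q by simp
    fix y assume y: "y \<in> OK" "absK (y - x) < qR TYPE('a) powi (-(k' - 1))"
    hence "vge (y - x) k'" using absK_lt_iff[of "y - x" "k' - 1"] by simp
    hence "vge (f y - f x) k" using k' x y by blast
    hence "absK (f y - f x) \<le> qR TYPE('a) powi (-k)" using absK_le_iff by blast
    thus "absK (f y - f x) < e" using k by simp
  qed
qed

lemma CK_const: "(\<lambda>t. c) \<in> CK"
  unfolding CK_def by (auto intro!: exI[of _ 1])

lemma CK_add:
  assumes "f \<in> CK" "g \<in> CK"
  shows "(\<lambda>t. f t + g t) \<in> CK"
  unfolding CK_def
proof safe
  fix x :: "'a fls" and e :: real assume x: "x \<in> OK" and e: "0 < e"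
  obtain d1 where d1: "d1 > 0" "\<forall>y\<in>OK. absK (y - x) < d1 \<longrightarrow> absK (f y - f x) < e"
    using assms(1) x e unfolding CK_def by blast
  obtain d2 where d2: "d2 > 0" "\<forall>y\<in>OK. absK (y - x) < d2 \<longrightarrow> absK (g y - g x) < e"
    using assms(2) x e unfolding CK_def by blast
  show "\<exists>d>0. \<forall>y\<in>OK. absK (y - x) < d \<longrightarrow> absK (f y + g y - (f x + g x)) < e"
  proof (intro exI conjI ballI impI)
    show "min d1 d2 > 0" using d1 d2 by simp
    fix y assume "y \<in> OK" "absK (y - x) < min d1 d2"
    hence "absK (f y - f x) < e" "absK (g y - g x) < e" using d1 d2 by auto
    moreover have "absK (f y + g y - (f x + g x)) \<le> max (absK (f y - f x)) (absK (g y - g x))"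
      using absK_ultra[of "f y - f x" "g y - g x"] by (simp add: algebra_simps)
    ultimately show "absK (f y + g y - (f x + g x)) < e" by linarith
  qed
qed

lemma CK_cmul:
  assumes "f \<in> CK"
  shows "(\<lambda>t. c * f t) \<in> CK"
proof (cases "c = 0")
  case True thus ?thesis using CK_const[of 0] by simp
next
  case False
  have c: "absK c > 0" using False absK_nonneg[of c] absK_eq0[of c] by linarith
  show ?thesis unfolding CK_def
  proof safe
    fix x :: "'a fls" and e :: real assume x: "x \<in> OK" and e: "0 < e"
    obtain d where d: "d > 0" "\<forall>y\<in>OK. absK (y - x) < d \<longrightarrow> absK (f y - f x) < e / absK c"
    proof -
      have "e / absK c > 0" using e c by simp
      thus ?thesis using assms x that unfolding CK_def by blast
    qed
    show "\<exists>d>0. \<forall>y\<in>OK. absK (y - x) < d \<longrightarrow> absK (c * f y - c * f x) < e"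
    proof (intro exI conjI ballI impI)
      show "d > 0" by fact
      fix y assume "y \<in> OK" "absK (y - x) < d"
      hence "absK (f y - f x) < e / absK c" using d by blast
      hence "absK c * absK (f y - f x) < e" using c by (simp add: field_simps)
      thus "absK (c * f y - c * f x) < e" by (simp add: absK_mult right_diff_distrib[symmetric])
    qed
  qed
qed

lemma CK_uminus: "f \<in> CK \<Longrightarrow> (\<lambda>t. - f t) \<in> CK"
  using CK_cmul[of f "-1"] by simp

lemma CK_diff: "f \<in> CK \<Longrightarrow> g \<in> CK \<Longrightarrow> (\<lambda>t. f t - g t) \<in> CK"
  using CK_add[of f "\<lambda>t. - g t"] CK_uminus[of g] by simp

lemma CK_sum: "(\<And>i. i \<in> A \<Longrightarrow> f i \<in> CK) \<Longrightarrow> (\<lambda>t. \<Sum>i\<in>A. f i t) \<in> CK"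
proof (induction A rule: infinite_finite_induct)
  case (infinite A) thus ?case using CK_const[of 0] by simp
next
  case empty thus ?case using CK_const[of 0] by simp
next
  case (insert x F)
  thus ?case using CK_add[of "f x" "\<lambda>t. \<Sum>i\<in>F. f i t"] by simp
qed

lemma CK_mult1:
  assumes "f \<in> CK" "g \<in> CK" "\<forall>t\<in>OK. vge (f t) 0" "\<forall>t\<in>OK. vge (g t) 0"
  shows "(\<lambda>t. f t * g t) \<in> CK"
  unfolding CK_def
proof safe
  fix x :: "'a fls" and e :: real assume x: "x \<in> OK" and e: "0 < e"
  obtain d1 where d1: "d1 > 0" "\<forall>y\<in>OK. absK (y - x) < d1 \<longrightarrow> absK (f y - f x) < e"
    using assms(1) x e unfolding CK_def by blast
  obtain d2 where d2: "d2 > 0" "\<forall>y\<in>OK. absK (y - x) < d2 \<longrightarrow> absK (g y - g x) < e"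
    using assms(2) x e unfolding CK_def by blast
  show "\<exists>d>0. \<forall>y\<in>OK. absK (y - x) < d \<longrightarrow> absK (f y * g y - f x * g x) < e"
  proof (intro exI conjI ballI impI)
    show "min d1 d2 > 0" using d1 d2 by simp
    fix y assume y: "y \<in> OK" "absK (y - x) < min d1 d2"
    hence 1: "absK (f y - f x) < e" "absK (g y - g x) < e" using d1 d2 by auto
    have b: "absK (f y) \<le> 1" "absK (g x) \<le> 1" using assms(3,4) x y absK_le1_iff by auto
    have eq: "f y * g y - f x * g x = f y * (g y - g x) + (f y - f x) * g x"
      by (simp add: algebra_simps)
    have "absK (f y) * absK (g y - g x) \<le> 1 * absK (g y - g x)"
      by (rule mult_right_mono) (use b absK_nonneg in auto)
    hence "absK (f y * (g y - g x)) < e" using 1 by (simp add: absK_mult)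
    moreover have "absK (f y - f x) * absK (g x) \<le> absK (f y - f x) * 1"
      by (rule mult_left_mono) (use b absK_nonneg in auto)
    hence "absK ((f y - f x) * g x) < e" using 1 by (simp add: absK_mult)
    ultimately show "absK (f y * g y - f x * g x) < e"
      using absK_ultra[of "f y * (g y - g x)" "(f y - f x) * g x"] eq by simp
  qed
qed

lemma CK_ulim:
  fixes g :: "'a::{finite,field} fls \<Rightarrow> 'a fls"
  assumes P: "\<And>N. P N \<in> CK" and lim: "\<And>k. \<exists>N. \<forall>t\<in>OK. vge (g t - P N t) k"
  shows "g \<in> CK"
  unfolding CK_def
proof safe
  fix x :: "'a fls" and e :: real assume x: "x \<in> OK" and e: "0 < e"
  obtain k where k: "qR TYPE('a) powi (-k) < e" using small_power e by blast
  obtain N where N: "\<forall>t\<in>OK. vge (g t - P N t) k" using lim by blast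
  obtain d where d: "d > 0" "\<forall>y\<in>OK. absK (y - x) < d \<longrightarrow> absK (P N y - P N x) < e"
    using P[of N] x e unfolding CK_def by blast
  show "\<exists>d>0. \<forall>y\<in>OK. absK (y - x) < d \<longrightarrow> absK (g y - g x) < e"
  proof (intro exI conjI ballI impI)
    show "d > 0" by fact
    fix y assume y: "y \<in> OK" "absK (y - x) < d"
    have 1: "absK (P N y - P N x) < e" using d y by blast
    have 2: "absK (g y - P N y) < e" using N y absK_le_iff[of "g y - P N y" k] k by auto
    have 3: "absK (g x - P N x) < e" using N x absK_le_iff[of "g x - P N x" k] k by auto
    have eq: "g y - g x = (g y - P N y) + ((P N y - P N x) - (g x - P N x))" by simp
    have h: "absK ((P N y - P N x) - (g x - P N x)) < e"
      using absK_ultra_diff[of "P N y - P N x" "g x - P N x"] 1 3 by (auto simp: max_def split: if_splits)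
    have "absK (g y - g x) \<le> max (absK (g y - P N y)) (absK ((P N y - P N x) - (g x - P N x)))"
      by (subst eq, rule absK_ultra)
    thus "absK (g y - g x) < e" using 2 h by (auto simp: max_def split: if_splits)
  qed
qed

lemma supnorm_le: "(\<And>t. t \<in> OK \<Longrightarrow> absK (f t) \<le> B) \<Longrightarrow> supnorm f \<le> B"
  unfolding supnorm_def by (rule cSUP_least) (use zero_OK in auto)

lemma supnorm_upper_bdd: "(\<And>t. t \<in> OK \<Longrightarrow> absK (f t) \<le> B) \<Longrightarrow> t \<in> OK \<Longrightarrow> absK (f t) \<le> supnorm f"
  unfolding supnorm_def by (rule cSUP_upper) (auto intro!: bdd_aboveI[where M=B])

lemma supnorm_upper: "f \<in> CK \<Longrightarrow> t \<in> OK \<Longrightarrow> absK (f t) \<le> supnorm f"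
  using CK_bounded supnorm_upper_bdd by metis

lemma supnorm_cong: "(\<And>t. t \<in> OK \<Longrightarrow> f t = g t) \<Longrightarrow> supnorm f = supnorm g"
  unfolding supnorm_def by (rule SUP_cong) auto

lemma series_rep_cong: "(\<And>t. t \<in> OK \<Longrightarrow> f t = g t) \<Longrightarrow> series_rep a b f = series_rep a b g"
proof -
  assume h: "\<And>t. t \<in> OK \<Longrightarrow> f t = g t"
  have "supnorm (\<lambda>t. f t - (\<Sum>n<N. a n * b n t)) = supnorm (\<lambda>t. g t - (\<Sum>n<N. a n * b n t))" for N
    by (rule supnorm_cong) (simp add: h)
  thus ?thesis unfolding series_rep_def by simp
qed

definition urep :: "(nat \<Rightarrow> 'a::{finite,field} fls) \<Rightarrow> (nat \<Rightarrow> 'a fls \<Rightarrow> 'a fls) \<Rightarrow> ('a fls \<Rightarrow> 'a fls) \<Rightarrow> bool" where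
  "urep a b f \<longleftrightarrow> (\<forall>k. \<exists>N0. \<forall>N\<ge>N0. \<forall>t\<in>OK. vge (f t - (\<Sum>n<N. a n * b n t)) k)"

definition nullK :: "(nat \<Rightarrow> 'a::zero fls) \<Rightarrow> bool" where
  "nullK a \<longleftrightarrow> (\<forall>k. \<exists>N. \<forall>n\<ge>N. vge (a n) k)"

lemma nullK_iff: "(\<lambda>n. absK (a n)) \<longlonglongrightarrow> 0 \<longleftrightarrow> nullK a"
  unfolding nullK_def by (rule absK_tendsto_iff)

lemma series_rep_I:
  assumes "urep a b f"
  shows "series_rep a b f"
  unfolding series_rep_def
proof (rule LIMSEQ_I)
  fix r :: real assume "r > 0"
  then obtain k where k: "qR TYPE('a) powi (-k) < r" using small_power by blast
  obtain N0 where N0: "\<forall>N\<ge>N0. \<forall>t\<in>OK. vge (f t - (\<Sum>n<N. a n * b n t)) k"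
    using assms unfolding urep_def by blast
  have "norm (supnorm (\<lambda>t. f t - (\<Sum>n<N. a n * b n t)) - 0) < r" if "N \<ge> N0" for N
  proof -
    have bd: "absK (f t - (\<Sum>n<N. a n * b n t)) \<le> qR TYPE('a) powi (-k)" if "t \<in> OK" for t :: "'a fls"
      using N0 \<open>N \<ge> N0\<close> that absK_le_iff by blast
    have "supnorm (\<lambda>t. f t - (\<Sum>n<N. a n * b n t)) \<le> qR TYPE('a) powi (-k)"
      by (rule supnorm_le) (use bd in auto)
    moreover have "absK (f 0 - (\<Sum>n<N. a n * b n 0)) \<le> supnorm (\<lambda>t. f t - (\<Sum>n<N. a n * b n t))"
      by (rule supnorm_upper_bdd[OF bd]) (auto simp: zero_OK)
    ultimately show ?thesis using k absK_nonneg[of "f 0 - (\<Sum>n<N. a n * b n 0)"] by simp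
  qed
  thus "\<exists>N0. \<forall>N\<ge>N0. norm (supnorm (\<lambda>t. f t - (\<Sum>n<N. a n * b n t)) - 0) < r" by blast
qed

lemma series_rep_D:
  assumes f: "f \<in> CK" and b: "\<And>n. b n \<in> CK" and s: "series_rep a b f"
  shows "urep a b f"
  unfolding urep_def
proof
  fix k :: int
  have q: "1 < qR TYPE('a)" using card_gt1[where 'a='a] by simp
  have "qR TYPE('a) powi (-k) > 0" using q by simp
  then obtain N0 where N0: "\<forall>N\<ge>N0. norm (supnorm (\<lambda>t. f t - (\<Sum>n<N. a n * b n t)) - 0) < qR TYPE('a) powi (-k)"
    using s unfolding series_rep_def using LIMSEQ_D by blast
  have "\<forall>N\<ge>N0. \<forall>t\<in>OK. vge (f t - (\<Sum>n<N. a n * b n t)) k"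
  proof safe
    fix N and t :: "'a fls" assume N: "N \<ge> N0" and t: "t \<in> OK"
    have ck: "(\<lambda>t. f t - (\<Sum>n<N. a n * b n t)) \<in> CK"
      by (intro CK_diff f CK_sum CK_cmul b)
    have "absK (f t - (\<Sum>n<N. a n * b n t)) \<le> supnorm (\<lambda>t. f t - (\<Sum>n<N. a n * b n t))"
      using supnorm_upper[OF ck t] by simp
    also have "\<dots> \<le> qR TYPE('a) powi (-k)"
    proof -
      have "\<bar>supnorm (\<lambda>t. f t - (\<Sum>n<N. a n * b n t))\<bar> < qR TYPE('a) powi (-k)" using N0 N by simp
      thus ?thesis by linarith
    qed
    finally show "vge (f t - (\<Sum>n<N. a n * b n t)) k" using absK_le_iff by blast
  qed
  thus "\<exists>N0. \<forall>N\<ge>N0. \<forall>t\<in>OK. vge (f t - (\<Sum>n<N. a n * b n t)) k" by blast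
qed

lemma urep_unique:
  assumes "urep a b f" "urep a b g" "t \<in> OK"
  shows "f t = g t"
proof -
  have "vge (f t - g t) k" for k
  proof -
    obtain N1 where N1: "\<forall>N\<ge>N1. \<forall>t\<in>OK. vge (f t - (\<Sum>n<N. a n * b n t)) k"
      using assms(1) unfolding urep_def by blast
    obtain N2 where N2: "\<forall>N\<ge>N2. \<forall>t\<in>OK. vge (g t - (\<Sum>n<N. a n * b n t)) k"
      using assms(2) unfolding urep_def by blast
    have "vge (f t - (\<Sum>n<max N1 N2. a n * b n t)) k" "vge (g t - (\<Sum>n<max N1 N2. a n * b n t)) k"
      using N1 N2 assms(3) by auto
    from vge_diff[OF this] show ?thesis by simp
  qed
  thus ?thesis using vge_all_zero[of "f t - g t"] by simp
qed

lemma urep_cong: "(\<And>t. t \<in> OK \<Longrightarrow> f t = g t) \<Longrightarrow> urep a b f \<Longrightarrow> urep a b g"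
  unfolding urep_def by simp

lemma slim:
  assumes A: "nullK A" and d: "\<And>n t. t \<in> OK \<Longrightarrow> vge (d n t) j" and dc: "\<And>n. d n \<in> CK"
  shows "\<exists>g\<in>CK. (\<forall>k N. (\<forall>n\<ge>N. vge (A n) k) \<longrightarrow> (\<forall>t\<in>OK. vge (g t - (\<Sum>n<N. A n * d n t)) (k + j)))"
proof -
  have ex: "\<exists>s. \<forall>k N. (\<forall>n\<ge>N. vge (A n * d n t) k) \<longrightarrow> vge (s - (\<Sum>n<N. A n * d n t)) k"
    if t: "t \<in> OK" for t :: "'a fls"
  proof (rule series_lim, rule allI)
    fix k
    obtain N where "\<forall>n\<ge>N. vge (A n) (k - j)" using A unfolding nullK_def by blast
    hence "\<forall>n\<ge>N. vge (A n * d n t) k" using vge_mult[OF _ d[OF t]] by (metis diff_add_cancel)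
    thus "\<exists>N. \<forall>n\<ge>N. vge (A n * d n t) k" by blast
  qed
  define g where "g t = (SOME s. \<forall>k N. (\<forall>n\<ge>N. vge (A n * d n t) k) \<longrightarrow> vge (s - (\<Sum>n<N. A n * d n t)) k)" for t
  have g: "\<forall>k N. (\<forall>n\<ge>N. vge (A n * d n t) k) \<longrightarrow> vge (g t - (\<Sum>n<N. A n * d n t)) k" if "t \<in> OK" for t :: "'a fls"
    unfolding g_def using someI_ex[OF ex[OF that]] .
  have main: "\<forall>k N. (\<forall>n\<ge>N. vge (A n) k) \<longrightarrow> (\<forall>t\<in>OK. vge (g t - (\<Sum>n<N. A n * d n t)) (k + j))"
  proof safe
    fix k N and t :: "'a fls" assume h: "\<forall>n\<ge>N. vge (A n) k" and t: "t \<in> OK"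
    hence "\<forall>n\<ge>N. vge (A n * d n t) (k + j)" using vge_mult d by blast
    thus "vge (g t - (\<Sum>n<N. A n * d n t)) (k + j)" using g[OF t] by blast
  qed
  have "g \<in> CK"
  proof (rule CK_ulim[of "\<lambda>N t. \<Sum>n<N. A n * d n t"])
    show "(\<lambda>t. \<Sum>n<N. A n * d n t) \<in> CK" for N by (intro CK_sum CK_cmul dc)
    fix k
    obtain N where "\<forall>n\<ge>N. vge (A n) (k - j)" using A unfolding nullK_def by blast
    thus "\<exists>N. \<forall>t\<in>OK. vge (g t - (\<Sum>n<N. A n * d n t)) k" using main by (metis diff_add_cancel)
  qed
  thus ?thesis using main by blast
qed

lemma slim_urep:
  assumes A: "nullK A" and main: "\<forall>k N. (\<forall>n\<ge>N. vge (A n) k) \<longrightarrow> (\<forall>t\<in>OK. vge (g t - (\<Sum>n<N. A n * d n t)) (k + j))"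
  shows "urep A d g"
  unfolding urep_def
proof
  fix k
  obtain N where N: "\<forall>n\<ge>N. vge (A n) (k - j)" using A unfolding nullK_def by blast
  have "\<forall>N'\<ge>N. \<forall>t\<in>OK. vge (g t - (\<Sum>n<N'. A n * d n t)) k"
  proof (intro allI impI)
    fix N' assume "N' \<ge> N"
    hence "\<forall>n\<ge>N'. vge (A n) (k - j)" using N by auto
    thus "\<forall>t\<in>OK. vge (g t - (\<Sum>n<N'. A n * d n t)) k" using main by (metis diff_add_cancel)
  qed
  thus "\<exists>N0. \<forall>N\<ge>N0. \<forall>t\<in>OK. vge (g t - (\<Sum>n<N. A n * d n t)) k" by blast
qed

definition normeq :: "(nat \<Rightarrow> 'a::{finite,field} fls) \<Rightarrow> ('a fls \<Rightarrow> 'a fls) \<Rightarrow> bool" where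
  "normeq a f \<longleftrightarrow> (\<forall>k. (\<forall>n. vge (a n) k) \<longleftrightarrow> (\<forall>t\<in>OK. vge (f t) k))"

lemma nullK_lower:
  assumes "nullK a" shows "\<exists>k0. \<forall>n. vge (a n) k0"
proof -
  obtain N where N: "\<forall>n\<ge>N. vge (a n) 0" using assms unfolding nullK_def by blast
  define k0 where "k0 = min 0 (Min ((\<lambda>n. fls_subdegree (a n)) ` {..<N}))"
  have "vge (a n) k0" for n
  proof (cases "n < N")
    case True
    hence "k0 \<le> fls_subdegree (a n)" unfolding k0_def by (simp add: min_le_iff_disj)
    thus ?thesis by (simp add: vge_iff_subdeg)
  next
    case False
    thus ?thesis using N vge_mono[of "a n" 0 k0] unfolding k0_def by simp
  qed
  thus ?thesis by blast
qed

lemma nullK_bdd: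
  assumes "nullK (a :: nat \<Rightarrow> 'a::{finite,field} fls)"
  shows "bdd_above (range (\<lambda>n. absK (a n)))"
proof -
  obtain k0 where "\<forall>n. vge (a n) k0" using nullK_lower[OF assms] by blast
  hence "\<forall>n. absK (a n) \<le> qR TYPE('a) powi (-k0)" using absK_le_iff by blast
  thus ?thesis by (auto intro!: bdd_aboveI)
qed

lemma SUP_le_iff:
  assumes "nullK (a :: nat \<Rightarrow> 'a::{finite,field} fls)"
  shows "(SUP n. absK (a n)) \<le> qR TYPE('a) powi (-k) \<longleftrightarrow> (\<forall>n. vge (a n) k)"
proof
  assume h: "(SUP n. absK (a n)) \<le> qR TYPE('a) powi (-k)"
  have "absK (a n) \<le> (SUP n. absK (a n))" for n by (rule cSUP_upper[OF _ nullK_bdd[OF assms]]) simp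
  thus "\<forall>n. vge (a n) k" using h absK_le_iff order_trans by metis
next
  assume "\<forall>n. vge (a n) k"
  thus "(SUP n. absK (a n)) \<le> qR TYPE('a) powi (-k)" using absK_le_iff by (auto intro!: cSUP_least)
qed

lemma supnorm_le_iff:
  assumes "f \<in> CK"
  shows "supnorm f \<le> qR TYPE('a::{finite,field}) powi (-k) \<longleftrightarrow> (\<forall>t\<in>OK. vge (f t :: 'a fls) k)"
proof
  assume h: "supnorm f \<le> qR TYPE('a) powi (-k)"
  show "\<forall>t\<in>OK. vge (f t) k" using supnorm_upper[OF assms] h absK_le_iff order_trans by metis
next
  assume "\<forall>t\<in>OK. vge (f t) k"
  thus "supnorm f \<le> qR TYPE('a) powi (-k)" using absK_le_iff by (auto intro!: supnorm_le)
qed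

lemma absK_exact:
  assumes "vge (x::'a::{finite,field} fls) k" "\<not> vge x (k+1)"
  shows "absK x = qR TYPE('a) powi (-k)"
proof -
  have "x \<noteq> 0" using assms(2) by auto
  hence "fls_subdegree x = k" using assms by (auto simp: vge_iff_subdeg)
  thus ?thesis using \<open>x \<noteq> 0\<close> by (simp add: absK_def)
qed

lemma exact_level:
  assumes "nullK a" "a n1 \<noteq> 0"
  shows "\<exists>k. (\<forall>n. vge (a n) k) \<and> \<not> (\<forall>n. vge (a n) (k+1))"
proof -
  obtain k0 where k0: "\<forall>n. vge (a n) k0" using nullK_lower[OF assms(1)] by blast
  define s where "s = fls_subdegree (a n1)"
  have ub: "k \<le> s" if "\<forall>n. vge (a n) k" for k
    using that[rule_format, of n1] assms(2) unfolding s_def by (simp add: vge_iff_subdeg)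
  define S where "S = {k. k0 \<le> k \<and> k \<le> s \<and> (\<forall>n. vge (a n) k)}"
  have fin: "finite S" unfolding S_def by (rule finite_subset[of _ "{k0..s}"]) auto
  have ne: "k0 \<in> S" unfolding S_def using k0 ub by auto
  define k where "k = Max S"
  have kS: "k \<in> S" unfolding k_def using fin ne by (intro Max_in) auto
  have "\<not> (\<forall>n. vge (a n) (k+1))"
  proof
    assume h: "\<forall>n. vge (a n) (k+1)"
    hence "k + 1 \<in> S" using kS ub[OF h] unfolding S_def by auto
    have "k + 1 \<le> Max S" by (rule Max_ge[OF fin \<open>k+1 \<in> S\<close>])
    thus False unfolding k_def by simp
  qed
  thus ?thesis using kS unfolding S_def by blast
qed

lemma normeq_imp_eq:
  assumes a: "nullK (a :: nat \<Rightarrow> 'a::{finite,field} fls)" and f: "f \<in> CK" and ne: "normeq a f"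
  shows "supnorm f = (SUP n. absK (a n))"
proof (cases "\<forall>n. a n = 0")
  case True
  hence "\<forall>t\<in>OK. vge (f t) k" for k using ne unfolding normeq_def by simp
  hence "\<forall>t\<in>OK. f t = 0" using vge_all_zero by blast
  hence "supnorm f = supnorm (\<lambda>_. 0 :: 'a fls)" by (intro supnorm_cong) auto
  also have "\<dots> = 0" unfolding supnorm_def using zero_OK by (subst cSUP_const) auto
  finally show ?thesis using True by simp
next
  case False
  then obtain n1 where "a n1 \<noteq> 0" by blast
  then obtain k where k: "\<forall>n. vge (a n) k" "\<not> (\<forall>n. vge (a n) (k+1))" using exact_level[OF a] by blast
  then obtain n2 where n2: "\<not> vge (a n2) (k+1)" by blast
  have "(SUP n. absK (a n)) \<le> qR TYPE('a) powi (-k)" using SUP_le_iff[OF a] k by blast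
  moreover have "absK (a n2) \<le> (SUP n. absK (a n))" by (rule cSUP_upper[OF _ nullK_bdd[OF a]]) simp
  moreover have "absK (a n2) = qR TYPE('a) powi (-k)" using absK_exact k n2 by blast
  ultimately have 1: "(SUP n. absK (a n)) = qR TYPE('a) powi (-k)" by simp
  have fk: "\<forall>t\<in>OK. vge (f t) k" "\<not> (\<forall>t\<in>OK. vge (f t) (k+1))" using ne k unfolding normeq_def by blast+
  then obtain t2 where t2: "t2 \<in> OK" "\<not> vge (f t2) (k+1)" by blast
  have "supnorm f \<le> qR TYPE('a) powi (-k)" using supnorm_le_iff[OF f] fk by blast
  moreover have "absK (f t2) \<le> supnorm f" by (rule supnorm_upper[OF f t2(1)])
  moreover have "absK (f t2) = qR TYPE('a) powi (-k)" using absK_exact fk t2 by blast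
  ultimately show ?thesis using 1 by simp
qed

lemma eq_imp_normeq:
  assumes a: "nullK (a :: nat \<Rightarrow> 'a::{finite,field} fls)" and f: "f \<in> CK"
    and e: "supnorm f = (SUP n. absK (a n))"
  shows "normeq a f"
  unfolding normeq_def using SUP_le_iff[OF a] supnorm_le_iff[OF f] e by metis

definition ONB' :: "(nat \<Rightarrow> 'a::{finite,field} fls \<Rightarrow> 'a fls) \<Rightarrow> bool" where
  "ONB' b \<longleftrightarrow> (\<forall>f\<in>CK. \<exists>!a. nullK a \<and> urep a b f) \<and>
     (\<forall>f\<in>CK. \<forall>a. nullK a \<and> urep a b f \<longrightarrow> normeq a f)"

lemma is_ONB_iff:
  assumes b: "\<And>n. b n \<in> CK"
  shows "is_ONB b \<longleftrightarrow> ONB' b"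
proof -
  have sr: "series_rep a b f \<longleftrightarrow> urep a b f" if "f \<in> CK" for a f
    using series_rep_I[of a b f] series_rep_D[of f b a] that b by blast
  have 1: "(\<exists>!a. (\<lambda>n. absK (a n)) \<longlonglongrightarrow> 0 \<and> series_rep a b f) \<longleftrightarrow> (\<exists>!a. nullK a \<and> urep a b f)"
    if "f \<in> CK" for f
  proof -
    have eq: "\<And>a. ((\<lambda>n. absK (a n)) \<longlonglongrightarrow> 0 \<and> series_rep a b f) = (nullK a \<and> urep a b f)"
      using sr[OF that] nullK_iff by blast
    show ?thesis by (simp only: eq)
  qed
  have 2: "((\<lambda>n. absK (a n)) \<longlonglongrightarrow> 0 \<and> series_rep a b f \<longrightarrow> supnorm f = (SUP n. absK (a n)))
      \<longleftrightarrow> (nullK a \<and> urep a b f \<longrightarrow> normeq a f)" if "f \<in> CK" for f a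
    using sr[OF that] nullK_iff normeq_imp_eq[OF _ that] eq_imp_normeq[OF _ that] by metis
  show ?thesis unfolding is_ONB_def ONB'_def using b 1 2 by simp
qed

definition unitK :: "'a::{finite,field} fls \<Rightarrow> bool" where
  "unitK u \<longleftrightarrow> u \<noteq> 0 \<and> fls_subdegree u = 0"

lemma unit_vge: "unitK u \<Longrightarrow> vge (u * x) k \<longleftrightarrow> vge x k"
  by (cases "x = 0") (auto simp: unitK_def vge_iff_subdeg)

lemma unit_vge': "unitK u \<Longrightarrow> vge (x * u) k \<longleftrightarrow> vge x k"
  using unit_vge[of u x k] by (simp add: mult.commute)

lemma unit_inverse: "unitK u \<Longrightarrow> unitK (inverse u)"
  by (auto simp: unitK_def)

lemma unit_mult: "unitK u \<Longrightarrow> unitK v \<Longrightarrow> unitK (u * v)"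
  by (auto simp: unitK_def)

lemma unit_one: "unitK 1" by (simp add: unitK_def)

lemma unit_power: "unitK u \<Longrightarrow> unitK (u ^ n)"
  by (induction n) (auto intro: unit_mult simp: unit_one)

lemma unit_prod: "(\<And>i. i \<in> I \<Longrightarrow> unitK (u i)) \<Longrightarrow> unitK (\<Prod>i\<in>I. u i)"
  by (induction I rule: infinite_finite_induct) (auto intro: unit_mult simp: unit_one)

lemma unit_const: "c \<noteq> 0 \<Longrightarrow> unitK (fls_const c)"
  by (simp add: unitK_def)

lemma urep_scale: "urep a (\<lambda>n t. u n * b n t) f \<longleftrightarrow> urep (\<lambda>n. a n * u n) b f"
  unfolding urep_def by (simp add: mult.assoc)

lemma nullK_scale: "(\<And>n. unitK (u n)) \<Longrightarrow> nullK (\<lambda>n. a n * u n) \<longleftrightarrow> nullK a"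
  unfolding nullK_def using unit_vge' by metis

lemma normeq_scale: "(\<And>n. unitK (u n)) \<Longrightarrow> normeq (\<lambda>n. a n * u n) f \<longleftrightarrow> normeq a f"
  unfolding normeq_def using unit_vge' by metis

lemma ONB'_scale:
  assumes b: "ONB' b" and u: "\<And>n. unitK (u n)"
  shows "ONB' (\<lambda>n t. u n * b n t)"
  unfolding ONB'_def
proof (intro conjI ballI allI impI)
  fix f :: "'a fls \<Rightarrow> 'a fls" assume f: "f \<in> CK"
  obtain a0 where a0: "nullK a0" "urep a0 b f" and uq: "\<And>a. nullK a \<and> urep a b f \<Longrightarrow> a = a0"
    using b f unfolding ONB'_def by metis
  define a where "a n = a0 n * inverse (u n)" for n
  have au: "(\<lambda>n. a n * u n) = a0" using u by (auto simp: a_def unitK_def)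
  show "\<exists>!a. nullK a \<and> urep a (\<lambda>n t. u n * b n t) f"
  proof (rule ex1I[of _ a])
    show "nullK a \<and> urep a (\<lambda>n t. u n * b n t) f"
      using a0 au nullK_scale[where u=u and a=a, OF u] urep_scale[of a u b f] by simp
    fix a' assume "nullK a' \<and> urep a' (\<lambda>n t. u n * b n t) f"
    hence "(\<lambda>n. a' n * u n) = a0" using uq nullK_scale[where u=u and a=a', OF u] urep_scale[of a' u b f] by blast
    thus "a' = a" using u unfolding a_def by (auto simp: unitK_def fun_eq_iff field_simps)
  qed
next
  fix f :: "'a fls \<Rightarrow> 'a fls" and a assume f: "f \<in> CK" and h: "nullK a \<and> urep a (\<lambda>n t. u n * b n t) f"
  hence "nullK (\<lambda>n. a n * u n)" "urep (\<lambda>n. a n * u n) b f"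
    using nullK_scale[where u=u and a=a, OF u] urep_scale[of a u b f] by auto
  hence "normeq (\<lambda>n. a n * u n) f" using b f unfolding ONB'_def by blast
  thus "normeq a f" using normeq_scale[where u=u and a=a and f=f, OF u] by blast
qed

lemma urep_add_coef:
  assumes "urep a b f" "urep a' b f'"
  shows "urep (\<lambda>n. a n + a' n) b (\<lambda>t. f t + f' t)"
  unfolding urep_def
proof
  fix k
  obtain N1 where N1: "\<forall>N\<ge>N1. \<forall>t\<in>OK. vge (f t - (\<Sum>n<N. a n * b n t)) k" using assms(1) unfolding urep_def by blast
  obtain N2 where N2: "\<forall>N\<ge>N2. \<forall>t\<in>OK. vge (f' t - (\<Sum>n<N. a' n * b n t)) k" using assms(2) unfolding urep_def by blast
  have "\<forall>N\<ge>max N1 N2. \<forall>t\<in>OK. vge (f t + f' t - (\<Sum>n<N. (a n + a' n) * b n t)) k"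
  proof safe
    fix N and t :: "'a fls" assume "max N1 N2 \<le> N" "t \<in> OK"
    hence h: "N \<ge> N1" "N \<ge> N2" "t \<in> OK" by auto
    have 1: "vge (f t - (\<Sum>n<N. a n * b n t)) k" using N1 h by blast
    have 2: "vge (f' t - (\<Sum>n<N. a' n * b n t)) k" using N2 h by blast
    have "vge ((f t - (\<Sum>n<N. a n * b n t)) + (f' t - (\<Sum>n<N. a' n * b n t))) k" by (rule vge_add[OF 1 2])
    thus "vge (f t + f' t - (\<Sum>n<N. (a n + a' n) * b n t)) k"
      by (simp add: distrib_right sum.distrib algebra_simps)
  qed
  thus "\<exists>N0. \<forall>N\<ge>N0. \<forall>t\<in>OK. vge (f t + f' t - (\<Sum>n<N. (a n + a' n) * b n t)) k" by blast
qed

lemma urep_diff_coef: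
  assumes "urep a b f" "urep a' b f'"
  shows "urep (\<lambda>n. a n - a' n) b (\<lambda>t. f t - f' t)"
  unfolding urep_def
proof
  fix k
  obtain N1 where N1: "\<forall>N\<ge>N1. \<forall>t\<in>OK. vge (f t - (\<Sum>n<N. a n * b n t)) k" using assms(1) unfolding urep_def by blast
  obtain N2 where N2: "\<forall>N\<ge>N2. \<forall>t\<in>OK. vge (f' t - (\<Sum>n<N. a' n * b n t)) k" using assms(2) unfolding urep_def by blast
  have "\<forall>N\<ge>max N1 N2. \<forall>t\<in>OK. vge (f t - f' t - (\<Sum>n<N. (a n - a' n) * b n t)) k"
  proof safe
    fix N and t :: "'a fls" assume "max N1 N2 \<le> N" "t \<in> OK"
    hence h: "N \<ge> N1" "N \<ge> N2" "t \<in> OK" by auto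
    have 1: "vge (f t - (\<Sum>n<N. a n * b n t)) k" using N1 h by blast
    have 2: "vge (f' t - (\<Sum>n<N. a' n * b n t)) k" using N2 h by blast
    have "vge ((f t - (\<Sum>n<N. a n * b n t)) - (f' t - (\<Sum>n<N. a' n * b n t))) k" by (rule vge_diff[OF 1 2])
    thus "vge (f t - f' t - (\<Sum>n<N. (a n - a' n) * b n t)) k"
      by (simp add: left_diff_distrib sum_subtractf algebra_simps)
  qed
  thus "\<exists>N0. \<forall>N\<ge>N0. \<forall>t\<in>OK. vge (f t - f' t - (\<Sum>n<N. (a n - a' n) * b n t)) k" by blast
qed

lemma urep_diff_basis:
  assumes "urep a b f" "urep a d g"
  shows "urep a (\<lambda>n t. b n t - d n t) (\<lambda>t. f t - g t)"
  unfolding urep_def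
proof
  fix k
  obtain N1 where N1: "\<forall>N\<ge>N1. \<forall>t\<in>OK. vge (f t - (\<Sum>n<N. a n * b n t)) k" using assms(1) unfolding urep_def by blast
  obtain N2 where N2: "\<forall>N\<ge>N2. \<forall>t\<in>OK. vge (g t - (\<Sum>n<N. a n * d n t)) k" using assms(2) unfolding urep_def by blast
  have "\<forall>N\<ge>max N1 N2. \<forall>t\<in>OK. vge (f t - g t - (\<Sum>n<N. a n * (b n t - d n t))) k"
  proof safe
    fix N and t :: "'a fls" assume "max N1 N2 \<le> N" "t \<in> OK"
    hence h: "N \<ge> N1" "N \<ge> N2" "t \<in> OK" by auto
    have 1: "vge (f t - (\<Sum>n<N. a n * b n t)) k" using N1 h by blast
    have 2: "vge (g t - (\<Sum>n<N. a n * d n t)) k" using N2 h by blast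
    have "vge ((f t - (\<Sum>n<N. a n * b n t)) - (g t - (\<Sum>n<N. a n * d n t))) k" by (rule vge_diff[OF 1 2])
    thus "vge (f t - g t - (\<Sum>n<N. a n * (b n t - d n t))) k"
      by (simp add: right_diff_distrib sum_subtractf algebra_simps)
  qed
  thus "\<exists>N0. \<forall>N\<ge>N0. \<forall>t\<in>OK. vge (f t - g t - (\<Sum>n<N. a n * (b n t - d n t))) k" by blast
qed

lemma urep_zero: "urep (\<lambda>n. 0) b (\<lambda>t. 0)"
  unfolding urep_def by simp

lemma urep_sum:
  assumes "finite I" "\<And>i. i \<in> I \<Longrightarrow> urep (a i) b (f i)"
  shows "urep (\<lambda>n. \<Sum>i\<in>I. a i n) b (\<lambda>t. \<Sum>i\<in>I. f i t)"
  using assms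
proof (induction I rule: finite_induct)
  case empty thus ?case using urep_zero by simp
next
  case (insert x F)
  thus ?case using urep_add_coef[of "a x" b "f x" "\<lambda>n. \<Sum>i\<in>F. a i n" "\<lambda>t. \<Sum>i\<in>F. f i t"] by simp
qed

lemma urep_bound:
  assumes "urep a c g" "\<And>n t. t \<in> OK \<Longrightarrow> vge (c n t) 0" "\<And>n. vge (a n) k" "t \<in> OK"
  shows "vge (g t) k"
proof -
  obtain N where N: "\<forall>t\<in>OK. vge (g t - (\<Sum>n<N. a n * c n t)) k"
    using assms(1) unfolding urep_def by blast
  have "vge (\<Sum>n<N. a n * c n t) k"
    by (rule vge_sum) (use vge_mult[OF assms(3) assms(2)[OF assms(4)]] in simp)
  from vge_add[OF N[rule_format, OF assms(4)] this] show ?thesis by simp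
qed

lemma nullK_zero: "nullK (\<lambda>n. 0)" by (simp add: nullK_def)

lemma nullK_add: "nullK (a :: nat \<Rightarrow> 'a::ab_group_add fls) \<Longrightarrow> nullK b \<Longrightarrow> nullK (\<lambda>n. a n + b n)"
  unfolding nullK_def
proof (intro allI)
  fix k assume "\<forall>k. \<exists>N. \<forall>n\<ge>N. vge (a n) k" "\<forall>k. \<exists>N. \<forall>n\<ge>N. vge (b n) k"
  then obtain N1 N2 where "\<forall>n\<ge>N1. vge (a n) k" "\<forall>n\<ge>N2. vge (b n) k" by blast
  hence "\<forall>n\<ge>max N1 N2. vge (a n + b n) k" using vge_add[of "a _" k "b _"] by auto
  thus "\<exists>N. \<forall>n\<ge>N. vge (a n + b n) k" by blast
qed

lemma nullK_diff: "nullK (a :: nat \<Rightarrow> 'a::ab_group_add fls) \<Longrightarrow> nullK b \<Longrightarrow> nullK (\<lambda>n. a n - b n)"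
  unfolding nullK_def
proof (intro allI)
  fix k assume "\<forall>k. \<exists>N. \<forall>n\<ge>N. vge (a n) k" "\<forall>k. \<exists>N. \<forall>n\<ge>N. vge (b n) k"
  then obtain N1 N2 where "\<forall>n\<ge>N1. vge (a n) k" "\<forall>n\<ge>N2. vge (b n) k" by blast
  hence "\<forall>n\<ge>max N1 N2. vge (a n - b n) k" using vge_diff[of "a _" k "b _"] by auto
  thus "\<exists>N. \<forall>n\<ge>N. vge (a n - b n) k" by blast
qed

lemma nullK_sum: "finite I \<Longrightarrow> (\<And>i. i \<in> I \<Longrightarrow> nullK (a i :: nat \<Rightarrow> 'a::ab_group_add fls)) \<Longrightarrow> nullK (\<lambda>n. \<Sum>i\<in>I. a i n)"
proof (induction I rule: finite_induct)
  case empty thus ?case using nullK_zero by simp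
next
  case (insert x F)
  thus ?case using nullK_add[of "a x" "\<lambda>n. \<Sum>i\<in>F. a i n"] by simp
qed

definition slimg :: "(nat \<Rightarrow> 'a::{finite,field} fls) \<Rightarrow> (nat \<Rightarrow> 'a fls \<Rightarrow> 'a fls) \<Rightarrow> int \<Rightarrow> 'a fls \<Rightarrow> 'a fls" where
  "slimg A d j = (SOME g. g \<in> CK \<and> (\<forall>k N. (\<forall>n\<ge>N. vge (A n) k) \<longrightarrow> (\<forall>t\<in>OK. vge (g t - (\<Sum>n<N. A n * d n t)) (k + j))))"

lemma slimg:
  assumes "nullK A" "\<And>n t. t \<in> OK \<Longrightarrow> vge (d n t) j" "\<And>n. d n \<in> CK"
  shows "slimg A d j \<in> CK" "\<forall>k N. (\<forall>n\<ge>N. vge (A n) k) \<longrightarrow> (\<forall>t\<in>OK. vge (slimg A d j t - (\<Sum>n<N. A n * d n t)) (k + j))"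
    "urep A d (slimg A d j)"
proof -
  have "\<exists>g. g \<in> CK \<and> (\<forall>k N. (\<forall>n\<ge>N. vge (A n) k) \<longrightarrow> (\<forall>t\<in>OK. vge (g t - (\<Sum>n<N. A n * d n t)) (k + j)))"
    using slim[of A d j] assms by blast
  from someI_ex[OF this] show 1: "slimg A d j \<in> CK"
    and 2: "\<forall>k N. (\<forall>n\<ge>N. vge (A n) k) \<longrightarrow> (\<forall>t\<in>OK. vge (slimg A d j t - (\<Sum>n<N. A n * d n t)) (k + j))"
    unfolding slimg_def by blast+
  show "urep A d (slimg A d j)" by (rule slim_urep[OF assms(1) 2])
qed

lemma slimg_bound:
  assumes "nullK A" "\<And>n t. t \<in> OK \<Longrightarrow> vge (d n t) j" "\<And>n. d n \<in> CK" "\<And>n. vge (A n) k" "t \<in> OK"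
  shows "vge (slimg A d j t) (k + j)"
  using slimg(2)[OF assms(1-3), rule_format, of 0 k t] assms(4,5) by simp

lemma perturb:
  fixes b c :: "nat \<Rightarrow> 'a::{finite,field} fls \<Rightarrow> 'a fls"
  assumes b: "ONB' b" and bc: "\<And>n. b n \<in> CK" and cc: "\<And>n. c n \<in> CK"
    and b0: "\<And>n t. t \<in> OK \<Longrightarrow> vge (b n t) 0"
    and close: "\<And>n t. t \<in> OK \<Longrightarrow> vge (c n t - b n t) 1"
  shows "ONB' c"
proof -
  define e where "e n t = b n t - c n t" for n t
  have e1: "vge (e n t) 1" if "t \<in> OK" for n t
    unfolding e_def using close[OF that] vge_diff_sym by blast
  have ec: "e n \<in> CK" for n unfolding e_def by (intro CK_diff bc cc)
  have c0: "vge (c n t) 0" if "t \<in> OK" for n t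
  proof -
    have "vge (b n t - e n t) 0" by (rule vge_diff[OF b0[OF that] vge_mono[OF e1[OF that]]]) simp
    thus ?thesis by (simp add: e_def)
  qed
  have bce: "(\<lambda>n t. b n t - e n t) = c" by (simp add: e_def fun_eq_iff)
  have gCK: "slimg A b 0 \<in> CK" if "nullK A" for A using slimg(1)[OF that b0 bc] by simp
  have gurep: "urep A b (slimg A b 0)" if "nullK A" for A using slimg(3)[OF that b0 bc] by simp
  have hurep: "urep A e (slimg A e 1)" if "nullK A" for A using slimg(3)[OF that e1 ec] by simp
  have hCK: "slimg A e 1 \<in> CK" if "nullK A" for A using slimg(1)[OF that e1 ec] by simp
  have hbound: "vge (slimg A e 1 t) (k + 1)" if "nullK A" "\<And>n. vge (A n) k" "t \<in> OK" for A k t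
    using slimg_bound[OF that(1) e1 ec that(2,3)] by simp
  have gh_urep: "urep A c (\<lambda>t. slimg A b 0 t - slimg A e 1 t)" if "nullK A" for A
    using urep_diff_basis[OF gurep[OF that] hurep[OF that]] bce by simp
  have decomp: "f t = slimg A b 0 t - slimg A e 1 t" if "nullK A" "urep A c f" "t \<in> OK" for A f t
    using urep_unique[OF that(2) gh_urep[OF that(1)] that(3)] .
  have normg: "normeq A (slimg A b 0)" if "nullK A" for A
    using b gCK[OF that] gurep[OF that] that unfolding ONB'_def by blast

  have uniq: "A = A'" if A: "nullK A" "urep A c f" and A': "nullK A'" "urep A' c f" for A A' f
  proof -
    define D where "D n = A n - A' n" for n
    have Dn: "nullK D" unfolding D_def by (rule nullK_diff[OF A(1) A'(1)])
    have Du: "urep D c (\<lambda>t. f t - f t)" unfolding D_def by (rule urep_diff_coef[OF A(2) A'(2)])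
    hence Du0: "urep D c (\<lambda>t. 0)" by simp
    have step: "\<forall>n. vge (D n) (k + 1)" if k: "\<forall>n. vge (D n) k" for k
    proof -
      have "vge (slimg D b 0 t) (k + 1)" if t: "t \<in> OK" for t
      proof -
        have "slimg D b 0 t = slimg D e 1 t" using decomp[OF Dn Du0 t] by simp
        thus ?thesis using hbound[OF Dn _ t] k by simp
      qed
      thus ?thesis using normg[OF Dn] unfolding normeq_def by blast
    qed
    obtain k0 where k0: "\<forall>n. vge (D n) k0" using nullK_lower[OF Dn] by blast
    have up: "\<forall>n. vge (D n) (k0 + int j)" for j
    proof (induction j)
      case 0 thus ?case using k0 by simp
    next
      case (Suc j)
      have eq: "k0 + int (Suc j) = k0 + int j + 1" by simp
      show ?case unfolding eq by (rule step[OF Suc.IH])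
    qed
    have "vge (D n) k" for n k
    proof (cases "k \<le> k0")
      case True thus ?thesis using k0 vge_mono by blast
    next
      case False
      thus ?thesis using up[of "nat (k - k0)"] by simp
    qed
    hence "D n = 0" for n using vge_all_zero by blast
    thus "A = A'" unfolding D_def by (auto simp: fun_eq_iff)
  qed

  have normc: "normeq A f" if f: "f \<in> CK" and A: "nullK A" "urep A c f" for A f
    unfolding normeq_def
  proof (rule allI, rule iffI)
    fix k assume k: "\<forall>n. vge (A n) k"
    show "\<forall>t\<in>OK. vge (f t) k"
    proof
      fix t :: "'a fls" assume t: "t \<in> OK"
      have "vge (slimg A b 0 t) k" using normg[OF A(1)] k t unfolding normeq_def by blast
      moreover have "vge (slimg A e 1 t) k" 
      proof -
        have "vge (slimg A e 1 t) (k + 1)" using hbound[OF A(1) _ t] k by blast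
        thus ?thesis using vge_mono by fastforce
      qed
      ultimately show "vge (f t) k" using decomp[OF A t] vge_diff by metis
    qed
  next
    fix k assume fk: "\<forall>t\<in>OK. vge (f t) k"
    obtain k0 where k0: "\<forall>n. vge (A n) k0" using nullK_lower[OF A(1)] by blast
    have up: "k0 + int j \<le> k \<longrightarrow> (\<forall>n. vge (A n) (k0 + int j))" for j
    proof (induction j)
      case 0 thus ?case using k0 by simp
    next
      case (Suc j)
      show ?case
      proof
        assume le: "k0 + int (Suc j) \<le> k"
        hence IH: "\<forall>n. vge (A n) (k0 + int j)" using Suc.IH by simp
        have "vge (slimg A b 0 t) (k0 + int j + 1)" if t: "t \<in> OK" for t
        proof -
          have "vge (slimg A e 1 t) (k0 + int j + 1)" using hbound[OF A(1) _ t] IH by blast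
          moreover have "vge (f t) (k0 + int j + 1)" 
          proof -
            have "k0 + int j + 1 \<le> k" using le by simp
            thus ?thesis using fk t vge_mono by blast
          qed
          ultimately have "vge (f t + slimg A e 1 t) (k0 + int j + 1)" using vge_add[of "f t" _ "slimg A e 1 t"] by blast
          thus ?thesis using decomp[OF A t] by simp
        qed
        hence "\<forall>n. vge (A n) (k0 + int j + 1)" using normg[OF A(1)] unfolding normeq_def by blast
        thus "\<forall>n. vge (A n) (k0 + int (Suc j))" by (simp add: add.commute add.left_commute)
      qed
    qed
    show "\<forall>n. vge (A n) k"
    proof (cases "k \<le> k0")
      case True thus ?thesis using k0 vge_mono by blast
    next
      case False
      thus ?thesis using up[of "nat (k - k0)"] by simp
    qed
  qed

  have exist: "\<exists>A. nullK A \<and> urep A c f" if f: "f \<in> CK" for f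
  proof -
    define alpha where "alpha Fi = (SOME a. nullK a \<and> urep a b Fi)" for Fi :: "'a fls \<Rightarrow> 'a fls"
    define F where "F = rec_nat f (\<lambda>i Fi. slimg (alpha Fi) e 1)"
    have F0: "F 0 = f" and FS: "F (Suc i) = slimg (alpha (F i)) e 1" for i
      unfolding F_def by simp_all
    have alpha: "nullK (alpha Fi) \<and> urep (alpha Fi) b Fi" if "Fi \<in> CK" for Fi
    proof -
      have "\<exists>a. nullK a \<and> urep a b Fi" using b that unfolding ONB'_def by blast
      thus ?thesis unfolding alpha_def by (rule someI_ex)
    qed
    have FCK: "F i \<in> CK" for i
    proof (induction i)
      case 0 thus ?case using f F0 by simp
    next
      case (Suc i) thus ?case using FS hCK alpha by simp
    qed
    define al where "al i = alpha (F i)" for i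
    have al: "nullK (al i)" "urep (al i) b (F i)" for i using alpha[OF FCK[of i]] unfolding al_def by auto
    obtain k0 where k0: "\<forall>n. vge (al 0 n) k0" using nullK_lower[OF al(1)[of 0]] by blast
    have lev: "\<forall>n. vge (al i n) (k0 + int i)" for i
    proof (induction i)
      case 0 thus ?case using k0 by simp
    next
      case (Suc i)
      have "vge (F (Suc i) t) (k0 + int i + 1)" if t: "t \<in> OK" for t
        using hbound[OF al(1)[of i] _ t] Suc.IH unfolding FS al_def by blast
      hence "\<forall>n. vge (al (Suc i) n) (k0 + int i + 1)"
        using b FCK[of "Suc i"] al[of "Suc i"] unfolding ONB'_def normeq_def by blast
      thus ?case by (simp add: add.commute add.left_commute)
    qed
    have Flev: "vge (F (Suc i) t) (k0 + int (Suc i))" if t: "t \<in> OK" for i t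
    proof -
      have "vge (slimg (al i) e 1 t) (k0 + int i + 1)" using hbound[OF al(1)[of i] _ t] lev[of i] by blast
      moreover have "k0 + int (Suc i) = k0 + int i + 1" by simp
      ultimately show ?thesis unfolding FS al_def by (simp add: algebra_simps)
    qed
    have Durep: "urep (al i) c (\<lambda>t. F i t - F (Suc i) t)" for i
    proof -
      have "urep (al i) e (F (Suc i))" using hurep[OF al(1)[of i]] unfolding FS al_def .
      from urep_diff_basis[OF al(2)[of i] this] show ?thesis using bce by simp
    qed
    have exA: "\<exists>s. \<forall>k N. (\<forall>i\<ge>N. vge (al i n) k) \<longrightarrow> vge (s - (\<Sum>i<N. al i n)) k" for n
    proof (rule series_lim, rule allI)
      fix k
      have "\<forall>i\<ge>nat (k - k0). vge (al i n) k" 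
      proof safe
        fix i assume "nat (k - k0) \<le> i"
        hence "k \<le> k0 + int i" by simp
        thus "vge (al i n) k" using lev[of i] vge_mono by blast
      qed
      thus "\<exists>N. \<forall>i\<ge>N. vge (al i n) k" by blast
    qed
    obtain A where A: "\<And>n k N. (\<forall>i\<ge>N. vge (al i n) k) \<Longrightarrow> vge (A n - (\<Sum>i<N. al i n)) k"
    proof -
      have "\<forall>n. \<exists>s. \<forall>k N. (\<forall>i\<ge>N. vge (al i n) k) \<longrightarrow> vge (s - (\<Sum>i<N. al i n)) k" using exA by blast
      then obtain A where "\<forall>n. \<forall>k N. (\<forall>i\<ge>N. vge (al i n) k) \<longrightarrow> vge (A n - (\<Sum>i<N. al i n)) k"
        by (rule choice[THEN exE])
      thus ?thesis using that by blast
    qed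
    have tail: "vge (A n - (\<Sum>i<N. al i n)) (k0 + int N)" for n N
    proof (rule A, intro allI impI)
      fix i assume "N \<le> i"
      hence "k0 + int N \<le> k0 + int i" by simp
      thus "vge (al i n) (k0 + int N)" using lev[of i] vge_mono by blast
    qed
    have nA: "nullK A" unfolding nullK_def
    proof
      fix k
      define N where "N = nat (k - k0)"
      have "nullK (\<lambda>n. \<Sum>i<N. al i n)" by (rule nullK_sum) (auto simp: al)
      then obtain M where M: "\<forall>n\<ge>M. vge (\<Sum>i<N. al i n) k" unfolding nullK_def by blast
      have "\<forall>n\<ge>M. vge (A n) k"
      proof safe
        fix n assume "M \<le> n"
        have "k \<le> k0 + int N" unfolding N_def by simp
        hence "vge (A n - (\<Sum>i<N. al i n)) k" using tail[of n N] vge_mono by blast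
        from vge_add[OF this M[rule_format, OF \<open>M \<le> n\<close>]] show "vge (A n) k" by simp
      qed
      thus "\<exists>N. \<forall>n\<ge>N. vge (A n) k" by blast
    qed
    define G where "G = slimg A c 0"
    have Gurep: "urep A c G" unfolding G_def by (rule slimg(3)[OF nA c0 cc])
    have "vge (G t - f t) (k0 + int (Suc K))" if t: "t \<in> OK" for K t
    proof -
      define K' where "K' = Suc K"
      have s: "urep (\<lambda>n. \<Sum>i<K'. al i n) c (\<lambda>t. \<Sum>i<K'. F i t - F (Suc i) t)"
        by (rule urep_sum) (auto simp: Durep)
      have d: "urep (\<lambda>n. A n - (\<Sum>i<K'. al i n)) c (\<lambda>t. G t - (\<Sum>i<K'. F i t - F (Suc i) t))"
        by (rule urep_diff_coef[OF Gurep s])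
      have "vge (G t - (\<Sum>i<K'. F i t - F (Suc i) t)) (k0 + int K')"
        by (rule urep_bound[OF d c0 tail t])
      moreover have "(\<Sum>i<K'. F i t - F (Suc i) t) = f t - F K' t"
        using sum_lessThan_telescope'[of "\<lambda>i. F i t" K'] F0 by simp
      ultimately have "vge (G t - (f t - F K' t)) (k0 + int K')" by simp
      moreover have "vge (F K' t) (k0 + int K')" unfolding K'_def by (rule Flev[OF t])
      ultimately have "vge (G t - (f t - F K' t) - F K' t) (k0 + int K')" by (rule vge_diff)
      thus ?thesis unfolding K'_def by simp
    qed
    hence "G t = f t" if "t \<in> OK" for t
    proof -
      have "vge (G t - f t) k" for k
      proof (cases "k \<le> k0 + 1")
        case True thus ?thesis using \<open>\<And>K t. t \<in> OK \<Longrightarrow> vge (G t - f t) (k0 + int (Suc K))\<close>[OF that, of 0] vge_mono by simp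
      next
        case False
        hence "vge (G t - f t) (1 + k)" using \<open>\<And>K t. t \<in> OK \<Longrightarrow> vge (G t - f t) (k0 + int (Suc K))\<close>[OF that, of "nat (k - k0)"] by simp
        thus ?thesis using vge_mono by fastforce
      qed
      thus ?thesis using vge_all_zero[of "G t - f t"] by simp
    qed
    hence "urep A c f" using urep_cong[OF _ Gurep] by metis
    thus ?thesis using nA by blast
  qed

  show ?thesis unfolding ONB'_def
  proof (intro conjI ballI allI impI)
    fix f :: "'a fls \<Rightarrow> 'a fls" assume f: "f \<in> CK"
    obtain A where "nullK A \<and> urep A c f" using exist[OF f] by blast
    thus "\<exists>!a. nullK a \<and> urep a c f" using uniq by blast
  next
    fix f :: "'a fls \<Rightarrow> 'a fls" and a assume "f \<in> CK" "nullK a \<and> urep a c f"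
    thus "normeq a f" using normc by blast
  qed
qed

definition Sn :: "nat \<Rightarrow> 'a::{finite,field} fls set" where
  "Sn n = {y. \<forall>i. (i < 0 \<or> int n \<le> i) \<longrightarrow> fls_nth y i = 0}"

lemma Sn_truncK: "y \<in> Sn n \<Longrightarrow> truncK n y = y"
  by (rule fls_eqI) (auto simp: Sn_def truncK_nth not_less)

lemma finite_Sn: "finite (Sn n)"
proof (rule finite_subset[OF _ finite_truncK_range[of n]])
  show "Sn n \<subseteq> truncK n ` UNIV" using Sn_truncK by (metis image_eqI iso_tuple_UNIV_I subsetI)
qed

lemma Sn_OK: "y \<in> Sn n \<Longrightarrow> y \<in> OK"
  by (auto simp: Sn_def OK_iff vge_def)

lemma Sn_zero: "0 \<in> Sn n" by (simp add: Sn_def)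

lemma Sn_add: "y \<in> Sn n \<Longrightarrow> z \<in> Sn n \<Longrightarrow> y + z \<in> Sn n"
  by (auto simp: Sn_def)

lemma Sn_diff: "y \<in> Sn n \<Longrightarrow> z \<in> Sn n \<Longrightarrow> y - z \<in> Sn n"
  by (auto simp: Sn_def)

lemma Sn_subdeg: "y \<in> Sn n \<Longrightarrow> y \<noteq> 0 \<Longrightarrow> fls_subdegree y < int n"
proof (rule ccontr)
  assume y: "y \<in> Sn n" "y \<noteq> 0" "\<not> fls_subdegree y < int n"
  hence "fls_nth y (fls_subdegree y) = 0" unfolding Sn_def by auto
  thus False using y(2) by simp
qed

lemma truncK_Sn: "truncK n x \<in> Sn n"
  by (simp add: Sn_def truncK_nth)

lemma poly_image_Sn:
  assumes "n \<ge> 1"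
  shows "(\<lambda>m. fps_to_fls (fps_of_poly m)) ` {m::'a::{finite,field} poly. degree m < n} = Sn n"
proof
  show "(\<lambda>m. fps_to_fls (fps_of_poly m)) ` {m::'a poly. degree m < n} \<subseteq> Sn n"
  proof clarify
    fix m :: "'a poly" assume "degree m < n"
    thus "fps_to_fls (fps_of_poly m) \<in> Sn n"
      unfolding Sn_def by (auto simp: coeff_eq_0)
  qed
next
  show "Sn n \<subseteq> (\<lambda>m. fps_to_fls (fps_of_poly m)) ` {m::'a poly. degree m < n}"
  proof
    fix y :: "'a fls" assume y: "y \<in> Sn n"
    define m where "m = Poly (map (\<lambda>i. fls_nth y (int i)) [0..<n])"
    have cm: "coeff m i = (if i < n then fls_nth y (int i) else 0)" for i
      unfolding m_def by (simp add: nth_default_def)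
    have "degree m \<le> n - 1" by (rule degree_le) (use assms in \<open>auto simp: cm\<close>)
    hence "degree m < n" using assms by simp
    moreover have "fps_to_fls (fps_of_poly m) = y"
      by (rule fls_eqI) (use y in \<open>auto simp: cm Sn_def not_less\<close>)
    ultimately show "y \<in> (\<lambda>m. fps_to_fls (fps_of_poly m)) ` {m::'a poly. degree m < n}" by blast
  qed
qed

definition ep :: "nat \<Rightarrow> 'a::{finite,field} fls \<Rightarrow> 'a fls" where
  "ep n x = (\<Prod>y\<in>Sn n. x - y)"

lemma carlitz_e_ep:
  assumes "n \<ge> 1"
  shows "carlitz_e n x = ep n x"
proof -
  have inj: "inj_on (\<lambda>m::'a poly. fps_to_fls (fps_of_poly m)) {m. degree m < n}"
    by (auto simp: inj_on_def fps_of_poly_eq_iff)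
  have "ep n x = (\<Prod>y\<in>(\<lambda>m. fps_to_fls (fps_of_poly m)) ` {m::'a poly. degree m < n}. x - y)"
    unfolding ep_def poly_image_Sn[OF assms] ..
  also have "\<dots> = carlitz_e n x"
    unfolding carlitz_e_def by (subst prod.reindex[OF inj]) simp
  finally show ?thesis by simp
qed

lemma ep_shift:
  assumes "z \<in> Sn n"
  shows "ep n (x - z) = ep n x"
proof -
  have bij: "bij_betw (\<lambda>y. y + z) (Sn n) (Sn n)"
  proof (rule bij_betw_byWitness[where f'="\<lambda>y. y - z"])
    show "\<forall>a\<in>Sn n. a + z - z = a" by simp
    show "\<forall>a'\<in>Sn n. a' - z + z = a'" by simp
    show "(\<lambda>y. y + z) ` Sn n \<subseteq> Sn n" using Sn_add assms by blast
    show "(\<lambda>y. y - z) ` Sn n \<subseteq> Sn n" using Sn_diff assms by blast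
  qed
  have "ep n x = (\<Prod>y\<in>Sn n. x - (y + z))"
    unfolding ep_def by (rule prod.reindex_bij_betw[OF bij, symmetric])
  thus ?thesis unfolding ep_def by (simp add: algebra_simps)
qed

lemma subdeg_prod:
  fixes g :: "'b \<Rightarrow> 'a::{finite,field} fls"
  assumes "\<And>i. i \<in> I \<Longrightarrow> g i \<noteq> 0"
  shows "fls_subdegree (\<Prod>i\<in>I. g i) = (\<Sum>i\<in>I. fls_subdegree (g i))" "(\<Prod>i\<in>I. g i) \<noteq> 0"
  using assms by (induction I rule: infinite_finite_induct) auto

definition sig :: "'a::{finite,field} itself \<Rightarrow> nat \<Rightarrow> int" where
  "sig _ n = (\<Sum>y\<in>(Sn n :: 'a fls set). fls_subdegree y)"

lemma Sn_Suc_bij: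
  "bij_betw (\<lambda>(c, y). y + fls_const c * fls_X ^ n) (UNIV \<times> Sn n) (Sn (Suc n) :: 'a::{finite,field} fls set)"
proof (rule bij_betw_byWitness[where f'="\<lambda>y'. (fls_nth y' (int n), y' - fls_const (fls_nth y' (int n)) * fls_X ^ n)"])
  show "\<forall>a\<in>UNIV \<times> Sn n. (\<lambda>y'. (fls_nth y' (int n), y' - fls_const (fls_nth y' (int n)) * fls_X ^ n))
     ((\<lambda>(c, y). y + fls_const c * fls_X ^ n) a) = a"
    by (auto simp: Sn_def)
  show "\<forall>a'\<in>Sn (Suc n). (\<lambda>(c, y). y + fls_const c * fls_X ^ n)
     ((\<lambda>y'. (fls_nth y' (int n), y' - fls_const (fls_nth y' (int n)) * fls_X ^ n)) a') = a'"
    by auto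
  show "(\<lambda>(c, y). y + fls_const c * fls_X ^ n) ` (UNIV \<times> Sn n) \<subseteq> Sn (Suc n)"
    by (auto simp: Sn_def)
  show "(\<lambda>y'. (fls_nth y' (int n), y' - fls_const (fls_nth y' (int n)) * fls_X ^ n)) ` Sn (Suc n) \<subseteq> UNIV \<times> Sn n"
    by (auto simp: Sn_def)
qed

lemma subdeg_plus_cX:
  assumes "y \<in> Sn n" "c \<noteq> 0"
  shows "fls_subdegree (y + fls_const c * fls_X ^ n :: 'a::{finite,field} fls) = fls_subdegree y + (if y = 0 then int n else 0)"
proof (cases "y = 0")
  case True thus ?thesis using assms by simp
next
  case False
  have "fls_subdegree (fls_const c * fls_X ^ n :: 'a fls) = int n" using assms(2) by simp
  hence "fls_subdegree (y + fls_const c * fls_X ^ n) = fls_subdegree y"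
    using Sn_subdeg[OF assms(1) False] False by (intro fls_subdegree_add_eq1) auto
  thus ?thesis using False by simp
qed

lemma sum_if_single: "finite S \<Longrightarrow> a \<in> S \<Longrightarrow> (\<Sum>y\<in>S. if y = a then c else 0) = (c::'b::comm_monoid_add)"
  by (subst sum.remove[of S a]) auto

lemma sig_Suc: "sig TYPE('a::{finite,field}) (Suc n) = int (card (UNIV :: 'a set)) * sig TYPE('a) n + (int (card (UNIV :: 'a set)) - 1) * int n"
proof -
  have "sig TYPE('a) (Suc n) = (\<Sum>p\<in>UNIV \<times> (Sn n :: 'a fls set). fls_subdegree ((\<lambda>(c, y). y + fls_const c * fls_X ^ n) p))"
    unfolding sig_def by (rule sum.reindex_bij_betw[OF Sn_Suc_bij, symmetric])
  also have "\<dots> = (\<Sum>c\<in>UNIV. \<Sum>y\<in>(Sn n :: 'a fls set). fls_subdegree (y + fls_const c * fls_X ^ n))"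
    by (subst sum.cartesian_product) (simp add: case_prod_beta)
  also have "\<dots> = (\<Sum>y\<in>(Sn n :: 'a fls set). fls_subdegree y) +
      (\<Sum>c\<in>UNIV - {0::'a}. \<Sum>y\<in>(Sn n :: 'a fls set). fls_subdegree (y + fls_const c * fls_X ^ n))"
    by (subst sum.remove[of UNIV 0]) simp_all
  also have "(\<Sum>c\<in>UNIV - {0::'a}. \<Sum>y\<in>(Sn n :: 'a fls set). fls_subdegree (y + fls_const c * fls_X ^ n))
     = (\<Sum>c\<in>UNIV - {0::'a}. sig TYPE('a) n + int n)"
  proof (rule sum.cong[OF refl])
    fix c :: 'a assume "c \<in> UNIV - {0}"
    hence "(\<Sum>y\<in>(Sn n :: 'a fls set). fls_subdegree (y + fls_const c * fls_X ^ n))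
        = (\<Sum>y\<in>(Sn n :: 'a fls set). fls_subdegree y + (if y = 0 then int n else 0))"
      by (intro sum.cong) (auto simp: subdeg_plus_cX)
    also have "\<dots> = sig TYPE('a) n + int n"
      unfolding sig_def sum.distrib using sum_if_single[OF finite_Sn Sn_zero] by simp
    finally show "(\<Sum>y\<in>(Sn n :: 'a fls set). fls_subdegree (y + fls_const c * fls_X ^ n)) = sig TYPE('a) n + int n" .
  qed
  also have "\<dots> = (int (card (UNIV :: 'a set)) - 1) * (sig TYPE('a) n + int n)"
    using card_gt1[where 'a='a] by (simp add: card_Diff_singleton of_nat_diff)
  finally show ?thesis unfolding sig_def by (simp add: algebra_simps)
qed

lemma sig_0: "sig TYPE('a::{finite,field}) 0 = 0"
proof -
  have "Sn 0 = {0 :: 'a fls}"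
  proof
    show "Sn 0 \<subseteq> {0 :: 'a fls}"
    proof
      fix y :: "'a fls" assume "y \<in> Sn 0"
      hence "fls_nth y i = 0" for i unfolding Sn_def by (cases "i < 0") auto
      thus "y \<in> {0}" using fls_zero_eqI by blast
    qed
  qed (simp add: Sn_zero)
  thus ?thesis by (simp add: sig_def)
qed

definition phi :: "nat \<Rightarrow> nat \<Rightarrow> nat" where
  "phi q n = (\<Sum>i\<in>{1..n}. q ^ (n - i))"

lemma phi_Suc: "phi q (Suc n) = q * phi q n + 1"
proof -
  have "phi q (Suc n) = (\<Sum>i\<in>{1..n}. q ^ (Suc n - i)) + q ^ 0"
    unfolding phi_def by (simp add: sum.atLeast_Suc_atMost_Suc_shift)
  also have "(\<Sum>i\<in>{1..n}. q ^ (Suc n - i)) = q * phi q n"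
    unfolding phi_def sum_distrib_left by (intro sum.cong) (auto simp: Suc_diff_le)
  finally show ?thesis by simp
qed

lemma sig_phi: "int n + sig TYPE('a::{finite,field}) n = int (phi (card (UNIV :: 'a set)) n)"
proof (induction n)
  case 0 thus ?case by (simp add: sig_0 phi_def)
next
  case (Suc n)
  have "int (Suc n) + sig TYPE('a) (Suc n) = int (card (UNIV :: 'a set)) * (int n + sig TYPE('a) n) + 1"
    by (simp add: sig_Suc algebra_simps)
  also have "\<dots> = int (phi (card (UNIV :: 'a set)) (Suc n))" using Suc.IH by (simp add: phi_Suc)
  finally show ?case .
qed

lemma ep_Xn:
  shows "fls_subdegree (ep n (fls_X ^ n) :: 'a::{finite,field} fls) = int (phi (card (UNIV :: 'a set)) n)"
    "ep n (fls_X ^ n :: 'a fls) \<noteq> 0"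
proof -
  have nz: "fls_X ^ n - y \<noteq> (0 :: 'a fls)" if "y \<in> Sn n" for y
  proof
    assume "fls_X ^ n - y = 0"
    hence "fls_nth y (int n) = 1" by (metis eq_iff_diff_eq_0 fls_X_power_nth)
    thus False using that by (simp add: Sn_def)
  qed
  have sd: "fls_subdegree (fls_X ^ n - y :: 'a fls) = fls_subdegree y + (if y = 0 then int n else 0)"
    if "y \<in> Sn n" for y
  proof (cases "y = 0")
    case False
    thus ?thesis using Sn_subdeg[OF that False] by (simp add: fls_subdegree_diff_eq2)
  qed simp
  show "ep n (fls_X ^ n :: 'a fls) \<noteq> 0" unfolding ep_def using subdeg_prod(2)[of "Sn n" "\<lambda>y. fls_X ^ n - y"] nz by blast
  have "fls_subdegree (ep n (fls_X ^ n :: 'a fls)) = (\<Sum>y\<in>(Sn n :: 'a fls set). fls_subdegree y + (if y = 0 then int n else 0))"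
  proof -
    have "fls_subdegree (ep n (fls_X ^ n :: 'a fls)) = (\<Sum>y\<in>Sn n. fls_subdegree (fls_X ^ n - y :: 'a fls))"
      unfolding ep_def by (rule subdeg_prod(1)) (use nz in blast)
    also have "\<dots> = (\<Sum>y\<in>(Sn n :: 'a fls set). fls_subdegree y + (if y = 0 then int n else 0))"
      by (rule sum.cong) (simp_all add: sd)
    finally show ?thesis .
  qed
  also have "\<dots> = sig TYPE('a) n + int n"
    unfolding sig_def sum.distrib using sum_if_single[OF finite_Sn Sn_zero] by simp
  finally show "fls_subdegree (ep n (fls_X ^ n :: 'a fls)) = int (phi (card (UNIV :: 'a set)) n)"
    using sig_phi[where 'a='a, of n] by simp
qed

lemma bracket_subdeg: "n \<ge> 1 \<Longrightarrow> fls_subdegree (bracketK n :: 'a::{finite,field} fls) = 1 \<and> (bracketK n :: 'a fls) \<noteq> 0"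
proof -
  assume n: "n \<ge> 1"
  have q: "card (UNIV :: 'a set) ^ n > 1" using card_gt1[where 'a='a] n by (intro one_less_power) auto
  have q': "(1::int) < int (card (UNIV :: 'a set)) ^ n" using q by (metis of_nat_1 of_nat_less_iff of_nat_power)
  have "fls_subdegree (fls_X ^ (card (UNIV :: 'a set) ^ n) - fls_X :: 'a fls) = 1"
    using q' by (subst fls_subdegree_diff_eq2) auto
  moreover have "(fls_X ^ (card (UNIV :: 'a set) ^ n) - fls_X :: 'a fls) \<noteq> 0"
  proof
    assume "(fls_X ^ (card (UNIV :: 'a set) ^ n) - fls_X :: 'a fls) = 0"
    hence "fls_nth (fls_X ^ (card (UNIV :: 'a set) ^ n) :: 'a fls) 1 = fls_nth (fls_X :: 'a fls) 1" by simp
    thus False using q' by simp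
  qed
  ultimately show ?thesis unfolding bracketK_def by simp
qed

lemma carlitzF_subdeg:
  "fls_subdegree (carlitzF n :: 'a::{finite,field} fls) = int (phi (card (UNIV :: 'a set)) n) \<and> (carlitzF n :: 'a fls) \<noteq> 0"
proof -
  have nz: "bracketK i ^ (card (UNIV :: 'a set) ^ (n - i)) \<noteq> (0 :: 'a fls)" if "i \<in> {1..n}" for i
    using bracket_subdeg[of i, where 'a='a] that by simp
  have "fls_subdegree (carlitzF n :: 'a fls) = (\<Sum>i\<in>{1..n}. fls_subdegree (bracketK i ^ (card (UNIV :: 'a set) ^ (n - i)) :: 'a fls))"
    unfolding carlitzF_def by (rule subdeg_prod(1)) (use nz in blast)
  also have "\<dots> = (\<Sum>i\<in>{1..n}. int (card (UNIV :: 'a set) ^ (n - i)))"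
    by (intro sum.cong) (auto simp: fls_subdegree_pow bracket_subdeg)
  also have "\<dots> = int (phi (card (UNIV :: 'a set)) n)" unfolding phi_def by simp
  finally show ?thesis using subdeg_prod(2)[of "{1..n}" "\<lambda>i. bracketK i ^ (card (UNIV :: 'a set) ^ (n - i)) :: 'a fls"] nz
    unfolding carlitzF_def by blast
qed

definition cong1 :: "'a::{finite,field} fls \<Rightarrow> 'a fls \<Rightarrow> bool" where
  "cong1 a b \<longleftrightarrow> vge a 0 \<and> vge b 0 \<and> vge (a - b) 1"

lemma cong1_mult:
  assumes "cong1 a b" "cong1 c d"
  shows "cong1 (a * c) (b * d)"
proof -
  have eq: "a * c - b * d = a * (c - d) + (a - b) * d" by (simp add: algebra_simps)
  have "vge (a * (c - d)) 1" using vge_mult[of a 0 "c - d" 1] assms unfolding cong1_def by simp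
  moreover have "vge ((a - b) * d) 1" using vge_mult[of "a - b" 1 d 0] assms unfolding cong1_def by simp
  ultimately have "vge (a * c - b * d) 1" unfolding eq by (rule vge_add)
  thus ?thesis using assms vge_mult[of a 0 c 0] vge_mult[of b 0 d 0] unfolding cong1_def by simp
qed

lemma cong1_refl: "vge a 0 \<Longrightarrow> cong1 a a"
  by (simp add: cong1_def)

lemma cong1_one: "cong1 1 1" by (simp add: cong1_def vge_def)

lemma cong1_power: "cong1 a b \<Longrightarrow> cong1 (a ^ n) (b ^ n)"
  by (induction n) (auto intro: cong1_mult simp: cong1_one)

lemma cong1_prod: "(\<And>i. i \<in> I \<Longrightarrow> cong1 (a i) (b i)) \<Longrightarrow> cong1 (\<Prod>i\<in>I. a i) (\<Prod>i\<in>I. b i)"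
  by (induction I rule: infinite_finite_induct) (auto intro: cong1_mult simp: cong1_one)

lemma unit_vge0: "unitK u \<Longrightarrow> vge u 0"
  by (simp add: unitK_def vge_iff_subdeg)

lemma cong1_unit: "unitK u \<Longrightarrow> cong1 a b \<Longrightarrow> cong1 (u * a) (u * b)"
  using cong1_mult[of u u a b] unit_vge0 cong1_refl by blast

lemma cong1_trans: "cong1 a b \<Longrightarrow> cong1 b c \<Longrightarrow> cong1 a c"
  unfolding cong1_def using vge_add[of "a - b" 1 "b - c"] by simp

lemma cong1_sym: "cong1 a b \<Longrightarrow> cong1 b a"
  unfolding cong1_def using vge_diff_sym by blast

lemma inverse_vge:
  assumes "(a :: 'a::{finite,field} fls) \<noteq> 0"
  shows "vge (inverse a) (- fls_subdegree a)"
  using assms by (simp add: vge_iff_subdeg)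

lemma OK_const_cong: "x \<in> OK \<Longrightarrow> cong1 x (fls_const (fls_nth x 0))"
  unfolding cong1_def OK_iff vge_def by auto

definition wK :: "nat \<Rightarrow> 'a::{finite,field} fls" where
  "wK n = (if n = 0 then 1 else ep n (fls_X ^ n) / carlitzF n)"

lemma wK_unit: "unitK (wK n :: 'a::{finite,field} fls)"
proof (cases "n = 0")
  case True thus ?thesis by (simp add: wK_def unit_one)
next
  case False
  have 1: "ep n (fls_X ^ n :: 'a fls) \<noteq> 0" "carlitzF n \<noteq> (0 :: 'a fls)"
    using ep_Xn(2) carlitzF_subdeg by blast+
  have "fls_subdegree (ep n (fls_X ^ n) / carlitzF n :: 'a fls) = 0"
    using 1 ep_Xn(1)[where 'a='a, of n] carlitzF_subdeg[where 'a='a, of n]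
    by (simp add: divide_inverse)
  thus ?thesis using False 1 by (simp add: wK_def unitK_def)
qed

lemma prod_one_cong:
  assumes "\<And>i. i \<in> I \<Longrightarrow> vge (a i - 1) 1"
  shows "cong1 (\<Prod>i\<in>I. a i) 1"
proof -
  have "cong1 (a i) 1" if "i \<in> I" for i
  proof -
    have "vge (a i - 1 + 1) 0" using vge_add[OF vge_mono[OF assms[OF that]], of 1 0] by (simp add: vge_def)
    thus ?thesis using assms[OF that] by (simp add: cong1_def vge_def)
  qed
  from cong1_prod[of I a "\<lambda>_. 1", OF this] show ?thesis by simp
qed

lemma carlitzE_cong:
  assumes x: "x \<in> OK"
  shows "cong1 (carlitzE n x) (wK n * fls_const (fls_nth x (int n)) :: 'a::{finite,field} fls)"
proof (cases "n = 0")
  case True thus ?thesis using OK_const_cong[OF x] by (simp add: carlitzE_def wK_def)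
next
  case False
  hence n1: "n \<ge> 1" by simp
  define z where "z = truncK n x"
  define x' where "x' = x - z"
  have zS: "z \<in> Sn n" unfolding z_def by (rule truncK_Sn)
  have x'n: "vge x' (int n)" unfolding x'_def z_def using truncK_close[OF x] .
  have x'nth: "fls_nth x' (int n) = fls_nth x (int n)" unfolding x'_def z_def by (simp add: truncK_nth)
  define v where "v = fls_shift (int n) x'"
  have x'v: "x' = fls_X ^ n * v" unfolding v_def by (simp add: fls_X_power_times_conv_shift)
  have vcong: "cong1 v (fls_const (fls_nth x (int n)))"
    using x'n x'nth unfolding cong1_def vge_def v_def by auto
  define R where "R = Sn n - {0 :: 'a fls}"
  have finR: "finite R" unfolding R_def using finite_Sn by simp
  have Xy_nz: "fls_X ^ n - y \<noteq> (0 :: 'a fls)" if "y \<in> Sn n" for y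
  proof
    assume "fls_X ^ n - y = 0"
    hence "fls_nth y (int n) = 1" by (metis eq_iff_diff_eq_0 fls_X_power_nth)
    thus False using that by (simp add: Sn_def)
  qed
  define dl where "dl y = (x' - fls_X ^ n) * inverse (fls_X ^ n - y)" for y :: "'a fls"
  have dl: "vge (dl y) 1" if y: "y \<in> R" for y
  proof -
    have yS: "y \<in> Sn n" and y0: "y \<noteq> 0" using y unfolding R_def by auto
    have sd: "fls_subdegree (fls_X ^ n - y) = fls_subdegree y"
      using Sn_subdeg[OF yS y0] y0 by (simp add: fls_subdegree_diff_eq2)
    have "vge (inverse (fls_X ^ n - y)) (- fls_subdegree y)"
      using inverse_vge[OF Xy_nz[OF yS]] sd by simp
    hence "vge (inverse (fls_X ^ n - y)) (1 - int n)"
      using Sn_subdeg[OF yS y0] vge_mono by fastforce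
    moreover have "vge (x' - fls_X ^ n) (int n)"
      using vge_diff[OF x'n, of "fls_X ^ n"] by (simp add: vge_def)
    ultimately show ?thesis unfolding dl_def using vge_mult[of "x' - fls_X ^ n" "int n"] by fastforce
  qed
  have fac: "x' - y = (fls_X ^ n - y) * (1 + dl y)" if "y \<in> R" for y
  proof -
    have "(fls_X ^ n - y) * inverse (fls_X ^ n - y) = 1" using Xy_nz that unfolding R_def by simp
    thus ?thesis unfolding dl_def by (simp add: algebra_simps)
  qed
  have ep_x: "ep n x = x' * (\<Prod>y\<in>R. x' - y)"
  proof -
    have "ep n x = ep n x'" unfolding x'_def using ep_shift[OF zS] by simp
    also have "\<dots> = (x' - 0) * (\<Prod>y\<in>R. x' - y)"
      unfolding ep_def R_def using finite_Sn Sn_zero by (subst prod.remove) auto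
    finally show ?thesis by simp
  qed
  have ep_X: "ep n (fls_X ^ n) = fls_X ^ n * (\<Prod>y\<in>R. fls_X ^ n - y :: 'a fls)"
  proof -
    have "ep n (fls_X ^ n :: 'a fls) = (fls_X ^ n - 0) * (\<Prod>y\<in>R. fls_X ^ n - y)"
      unfolding ep_def R_def using finite_Sn Sn_zero by (subst prod.remove) auto
    thus ?thesis by simp
  qed
  define P where "P = (\<Prod>y\<in>R. 1 + dl y)"
  have Pc: "cong1 P 1" unfolding P_def by (rule prod_one_cong) (use dl in simp)
  have "(\<Prod>y\<in>R. x' - y) = (\<Prod>y\<in>R. (fls_X ^ n - y) * (1 + dl y))"
    by (rule prod.cong) (simp_all add: fac)
  also have "\<dots> = (\<Prod>y\<in>R. fls_X ^ n - y) * P" unfolding P_def by (rule prod.distrib)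
  finally have "ep n x = ep n (fls_X ^ n) * (v * P)"
    unfolding ep_x ep_X by (simp add: x'v[symmetric] mult_ac) (simp add: x'v mult_ac)
  moreover have "carlitz_e n x = ep n x" by (rule carlitz_e_ep[OF n1])
  ultimately have "carlitzE n x = wK n * (v * P)"
    using n1 False by (simp add: carlitzE_def wK_def)
  moreover have "cong1 (v * P) (fls_const (fls_nth x (int n)))"
    using cong1_mult[OF vcong Pc] by simp
  ultimately show ?thesis using cong1_unit[OF wK_unit] by simp
qed

lemma hasseD_cong:
  assumes x: "x \<in> OK"
  shows "cong1 (hasseD n x) (fls_const (fls_nth x (int n)) :: 'a::{finite,field} fls)"
  unfolding cong1_def vge_def hasseD_def by auto

lemma CK_id: "(\<lambda>x::'a::{finite,field} fls. x) \<in> CK"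
  unfolding CK_def by blast

lemma OK_diff: "x \<in> OK \<Longrightarrow> y \<in> OK \<Longrightarrow> x - y \<in> OK"
  by (simp add: OK_iff vge_diff)

lemma CK_prod1:
  assumes "\<And>i. i \<in> I \<Longrightarrow> f i \<in> CK" "\<And>i t. i \<in> I \<Longrightarrow> t \<in> OK \<Longrightarrow> vge (f i t) 0"
  shows "(\<lambda>t. \<Prod>i\<in>I. f i t) \<in> CK \<and> (\<forall>t\<in>OK. vge (\<Prod>i\<in>I. f i t) 0)"
  using assms
proof (induction I rule: infinite_finite_induct)
  case (infinite A) thus ?case using CK_const[of 1] by (simp add: vge_def)
next
  case empty thus ?case using CK_const[of 1] by (simp add: vge_def)
next
  case (insert x F)
  have 1: "(\<lambda>t. \<Prod>i\<in>F. f i t) \<in> CK" "\<forall>t\<in>OK. vge (\<Prod>i\<in>F. f i t) 0" using insert by auto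
  have 2: "f x \<in> CK" "\<forall>t\<in>OK. vge (f x t) 0" using insert by auto
  have "(\<lambda>t. f x t * (\<Prod>i\<in>F. f i t)) \<in> CK" by (rule CK_mult1[OF 2(1) 1(1) 2(2) 1(2)])
  moreover have "\<forall>t\<in>OK. vge (f x t * (\<Prod>i\<in>F. f i t)) 0" using 1 2 vge_mult[of _ 0 _ 0] by fastforce
  ultimately show ?case using insert by simp
qed

lemma CK_power1:
  assumes "f \<in> CK" "\<And>t. t \<in> OK \<Longrightarrow> vge (f t) 0"
  shows "(\<lambda>t. f t ^ d) \<in> CK \<and> (\<forall>t\<in>OK. vge (f t ^ d) 0)"
  using CK_prod1[of "{..<d}" "\<lambda>_. f"] assms by simp

lemma hasseD_CK: "(hasseD n :: 'a::{finite,field} fls \<Rightarrow> 'a fls) \<in> CK"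
proof (rule CK_I_mod)
  fix k
  have "vge (hasseD n x - hasseD n y) k" if h: "vge (x - y) (k + int n)" for x y :: "'a fls"
  proof -
    have "fls_nth x i = fls_nth y i" if "i < k + int n" for i using that h unfolding vge_def by auto
    thus ?thesis unfolding vge_def hasseD_def by auto
  qed
  thus "\<exists>k'. \<forall>x\<in>(OK :: 'a fls set). \<forall>y\<in>OK. vge (x - y) k' \<longrightarrow> vge (hasseD n x - hasseD n y) k" by blast
qed

lemma carlitzE_fun:
  "n \<ge> 1 \<Longrightarrow> carlitzE n = (\<lambda>x. inverse (carlitzF n) * ep n x :: 'a::{finite,field} fls)"
  by (rule ext) (simp add: carlitzE_def carlitz_e_ep divide_inverse mult.commute)

lemma ep_CK: "(ep n :: 'a::{finite,field} fls \<Rightarrow> 'a fls) \<in> CK"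
proof -
  have "(\<lambda>t. \<Prod>y\<in>Sn n. t - y) \<in> CK"
    by (rule conjunct1[OF CK_prod1]) (auto intro!: CK_diff CK_id CK_const simp: OK_iff[symmetric] Sn_OK OK_diff)
  thus ?thesis unfolding ep_def[abs_def] .
qed

lemma carlitzE_CK: "(carlitzE n :: 'a::{finite,field} fls \<Rightarrow> 'a fls) \<in> CK"
proof (cases "n = 0")
  case True
  have "carlitzE n = (\<lambda>x::'a fls. x)" using True by (simp add: carlitzE_def[abs_def])
  thus ?thesis using CK_id[where 'a='a] by simp
next
  case False
  have "(\<lambda>x. inverse (carlitzF n) * ep n x :: 'a fls) \<in> CK" by (rule CK_cmul[OF ep_CK])
  thus ?thesis using carlitzE_fun[of n, where 'a='a] False by simp
qed

lemma carlitzE_vge: "x \<in> OK \<Longrightarrow> vge (carlitzE n x :: 'a::{finite,field} fls) 0"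
  using carlitzE_cong[of x n] by (simp add: cong1_def)

lemma hasseD_vge: "x \<in> OK \<Longrightarrow> vge (hasseD n x :: 'a::{finite,field} fls) 0"
  using hasseD_cong[of x n] by (simp add: cong1_def)

lemma carlitzG_CK: "(carlitzG j :: 'a::{finite,field} fls \<Rightarrow> 'a fls) \<in> CK \<and> (\<forall>t\<in>OK. vge (carlitzG j t :: 'a fls) 0)"
proof -
  have "(\<lambda>t. \<Prod>n\<in>{..j}. carlitzE n t ^ qdigit TYPE('a) j n :: 'a fls) \<in> CK \<and>
      (\<forall>t\<in>OK. vge (\<Prod>n\<in>{..j}. carlitzE n t ^ qdigit TYPE('a) j n :: 'a fls) (0::int))"
    using CK_prod1[of "{..j}" "\<lambda>n t. carlitzE n t ^ qdigit TYPE('a) j n"] CK_power1[OF carlitzE_CK carlitzE_vge, where 'a='a] by auto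
  thus ?thesis unfolding carlitzG_def[abs_def] by simp
qed

lemma digitD_CK: "(digitD j :: 'a::{finite,field} fls \<Rightarrow> 'a fls) \<in> CK \<and> (\<forall>t\<in>OK. vge (digitD j t :: 'a fls) 0)"
proof -
  have "(\<lambda>t. \<Prod>n\<in>{..j}. hasseD n t ^ qdigit TYPE('a) j n :: 'a fls) \<in> CK \<and>
      (\<forall>t\<in>OK. vge (\<Prod>n\<in>{..j}. hasseD n t ^ qdigit TYPE('a) j n :: 'a fls) (0::int))"
    using CK_prod1[of "{..j}" "\<lambda>n t. hasseD n t ^ qdigit TYPE('a) j n"] CK_power1[OF hasseD_CK hasseD_vge, where 'a='a] by auto
  thus ?thesis unfolding digitD_def[abs_def] by simp
qed

definition uG :: "'a::{finite,field} itself \<Rightarrow> nat \<Rightarrow> 'a fls" where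
  "uG _ j = (\<Prod>n\<in>{..j}. wK n ^ qdigit TYPE('a) j n)"

lemma uG_unit: "unitK (uG TYPE('a::{finite,field}) j)"
  unfolding uG_def by (intro unit_prod unit_power wK_unit)

lemma G_D_cong:
  assumes x: "x \<in> OK"
  shows "cong1 (carlitzG j x) (uG TYPE('a) j * digitD j x :: 'a::{finite,field} fls)"
proof -
  have c: "cong1 (carlitzE n x) (wK n * hasseD n x :: 'a fls)" for n
  proof -
    have "cong1 (wK n * hasseD n x) (wK n * fls_const (fls_nth x (int n)) :: 'a fls)"
      by (rule cong1_unit[OF wK_unit hasseD_cong[OF x]])
    thus ?thesis using carlitzE_cong[OF x, of n] cong1_sym cong1_trans by blast
  qed
  have "cong1 (carlitzG j x) (\<Prod>n\<in>{..j}. (wK n * hasseD n x) ^ qdigit TYPE('a) j n)"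
    unfolding carlitzG_def by (intro cong1_prod cong1_power c)
  also have "(\<Prod>n\<in>{..j}. (wK n * hasseD n x) ^ qdigit TYPE('a) j n) = uG TYPE('a) j * digitD j x"
    unfolding uG_def digitD_def by (simp add: power_mult_distrib prod.distrib)
  finally show ?thesis .
qed

lemma ONB'_transfer:
  fixes b c :: "nat \<Rightarrow> 'a::{finite,field} fls \<Rightarrow> 'a fls"
  assumes b: "ONB' b" and bc: "\<And>n. b n \<in> CK" and cc: "\<And>n. c n \<in> CK"
    and b0: "\<And>n t. t \<in> OK \<Longrightarrow> vge (b n t) 0"
    and u: "\<And>n. unitK (u n)"
    and close: "\<And>n t. t \<in> OK \<Longrightarrow> vge (c n t - u n * b n t) 1"
  shows "ONB' c"
proof (rule perturb[of "\<lambda>n t. u n * b n t"])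
  show "ONB' (\<lambda>n t. u n * b n t)" by (rule ONB'_scale[OF b u])
  show "(\<lambda>t. u n * b n t) \<in> CK" for n by (rule CK_cmul[OF bc])
  show "c n \<in> CK" for n by (rule cc)
  show "vge (u n * b n t) 0" if "t \<in> OK" for n t using unit_vge[OF u] b0[OF that] by simp
  show "vge (c n t - u n * b n t) 1" if "t \<in> OK" for n t by (rule close[OF that])
qed

theorem theorem6:
  shows "is_ONB (carlitzG :: nat \<Rightarrow> 'a::{finite,field} fls \<Rightarrow> 'a fls)
     \<longleftrightarrow> is_ONB (digitD :: nat \<Rightarrow> 'a fls \<Rightarrow> 'a fls)"
proof -
  have G: "(carlitzG j :: 'a fls \<Rightarrow> 'a fls) \<in> CK" "\<And>t. t \<in> OK \<Longrightarrow> vge (carlitzG j t :: 'a fls) 0" for j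
    using carlitzG_CK[of j, where 'a='a] by auto
  have D: "(digitD j :: 'a fls \<Rightarrow> 'a fls) \<in> CK" "\<And>t. t \<in> OK \<Longrightarrow> vge (digitD j t :: 'a fls) 0" for j
    using digitD_CK[of j, where 'a='a] by auto
  have cl: "vge (carlitzG j t - uG TYPE('a) j * digitD j t :: 'a fls) 1" if "t \<in> OK" for j t
    using G_D_cong[OF that, of j] by (simp add: cong1_def)
  have "ONB' (carlitzG :: nat \<Rightarrow> 'a fls \<Rightarrow> 'a fls) \<longleftrightarrow> ONB' (digitD :: nat \<Rightarrow> 'a fls \<Rightarrow> 'a fls)"
  proof
    assume h: "ONB' (carlitzG :: nat \<Rightarrow> 'a fls \<Rightarrow> 'a fls)"
    show "ONB' (digitD :: nat \<Rightarrow> 'a fls \<Rightarrow> 'a fls)"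
    proof (rule ONB'_transfer[OF h G(1) D(1) G(2)])
      show "unitK (inverse (uG TYPE('a) j))" for j by (rule unit_inverse[OF uG_unit])
      fix j and t :: "'a fls" assume t: "t \<in> OK"
      have u: "uG TYPE('a) j \<noteq> 0" using uG_unit[where 'a='a] by (simp add: unitK_def)
      have "digitD j t - inverse (uG TYPE('a) j) * carlitzG j t
          = - (inverse (uG TYPE('a) j) * (carlitzG j t - uG TYPE('a) j * digitD j t))"
        using u by (simp add: algebra_simps)
      moreover have "vge (inverse (uG TYPE('a) j) * (carlitzG j t - uG TYPE('a) j * digitD j t)) 1"
        using unit_vge[OF unit_inverse[OF uG_unit]] cl[OF t] by blast
      ultimately show "vge (digitD j t - inverse (uG TYPE('a) j) * carlitzG j t) 1" by simp
    qed
  next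
    assume h: "ONB' (digitD :: nat \<Rightarrow> 'a fls \<Rightarrow> 'a fls)"
    show "ONB' (carlitzG :: nat \<Rightarrow> 'a fls \<Rightarrow> 'a fls)"
    proof (rule ONB'_transfer[OF h D(1) G(1) D(2)])
      show "unitK (uG TYPE('a) j)" for j by (rule uG_unit)
      fix j and t :: "'a fls" assume t: "t \<in> OK"
      show "vge (carlitzG j t - uG TYPE('a) j * digitD j t) 1" by (rule cl[OF t])
    qed
  qed
  thus ?thesis using is_ONB_iff[of carlitzG] is_ONB_iff[of digitD] G(1) D(1) by blast
qed

end
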